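(* Let $\mathcal{U}=PC(\mathbb{R}_+,U)$ and let $\Sigma=(X,\mathcal{U},\phi)$ be a time-varying control system satisfying the BIC property. (a) If there exists a coercive iISS Lyapunov function for $\Sigma$, then $\Sigma$ is forward complete and iISS. (b) If there exists a coercive ISS Lyapunov function in dissipative form for $\Sigma$, then $\Sigma$ is ISS.
   Context: Comparison classes: $\mathcal{P}$ (continuous, zero at $0$, positive elsewhere), $\mathcal{K}$ (strictly increasing members of $\mathcal{P}$), $\mathcal{K}_\infty$ (unbounded members of $\mathcal{K}$), $\mathcal{KL}$ (continuous $\beta$ with $\beta(\cdot,t)\in\mathcal{K}$ and $\beta(r,\cdot)$ continuous, strictly decreasing to $0$ for $r>0$). $PC(\mathbb{R}_+,U)$ is the space of globally bounded, right-continuous, piecewise continuous functions $\mathbb{R}_+\to U$ (discontinuities without accumulation points), with norm $\|u\|_{\mathcal{U}}=\sup_{s\ge0}\|u(s)\|_U$. Control system. $\Sigma=(X,\mathcal{U},\phi)$ consists of a normed space $X$, an input space $\mathcal{U}$ of functions $\mathbb{R}_+\to U$ that is shift-invariant with $\|u(\cdot+\tau)\|_{\mathcal{U}}\le\|u\|_{\mathcal{U}}$, and a map $\phi(t,t_0,x_0,u)$ defined for $t\in[t_0,t_m(t_0,x_0,u))$ with $t_m\in(t_0,\infty]$. It satisfies: - identity: $\phi(t_0,t_0,x_0,u)=x_0$; - causality: $\phi(t,t_0,x_0,u)$ depends only on $u|_{[t_0,t)}$; - continuity in $t$; - cocycle: $\phi(t,\tau,\phi(\tau,t_0,x_0,u),u)=\phi(t,t_0,x_0,u)$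 for $t_0\le\tau\le t<t_m$. The system is forward complete if $t_m=\infty$ always. BIC: whenever $t_m<\infty$, the trajectory is unbounded on $[t_0,t_m)$. Lie derivative: $\dot V_u(t,x)=\limsup_{h\to0^+}\frac1h\big(V(t+h,\phi(t+h,t,x,u))-V(t,x)\big)$. Coercive iISS Lyapunov function. A continuous $V:\mathbb{R}_+\times X\to\mathbb{R}_+$ with $V(t,0)=0$ for which there exist $\alpha_1,\alpha_2\in\mathcal{K}_\infty$, $\eta\in\mathcal{P}$ and $\chi\in\mathcal{K}$ such that: - $\alpha_1(\|x\|_X)\le V(t,x)\le\alpha_2(\|x\|_X)$ for all $t\ge0$ and $x\in X$; - $\dot V_u(t,x)\le-\eta(\|x\|_X)+\chi(\|u(t)\|_U)$ for all $x\in X$, $u\in\mathcal{U}$ and $t\ge0$. If in addition $\lim_{\tau\to\infty}\eta(\tau)=\infty$ or $\liminf_{\tau\to\infty}\eta(\tau)\ge\lim_{\tau\to\infty}\chi(\tau)$, then $V$ is a coercive ISS Lyapunov function in dissipative form. iISS. $\Sigma$ (forward complete, with $\mathcal{U}=PC(\mathbb{R}_+,U)$) is iISS if there exist $\alpha\in\mathcal{K}_\infty$, $\mu\in\mathcal{K}$ and $\beta\in\mathcal{KL}$ such that for all $x_0$, $u$ and $t\ge t_0\ge0$: $$\|\phi(t,t_0,x_0,u)\|_X\le\beta(\|x_0\|_X,t-t_0)+\alpha\Big(\int_{t_0}^t\mu(\|u(s)\|_U)\,ds\Big).$$ ISS. There exist $\beta\in\mathcal{KL}$ and $\gamma\in\mathcal{K}$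 such that all trajectories exist on $[t_0,\infty)$ and $$\|\phi(t,t_0,x_0,u)\|_X\le\beta(\|x_0\|_X,t-t_0)+\gamma(\|u\|_{\mathcal{U}}).$$ *)

theory Defs
  imports "HOL-Analysis.Analysis"
begin

definition class_P :: "(real \<Rightarrow> real) \<Rightarrow> bool" where
  "class_P f \<longleftrightarrow> continuous_on {0..} f \<and> f 0 = 0 \<and> (\<forall>r>0. f r > 0)"

definition class_K :: "(real \<Rightarrow> real) \<Rightarrow> bool" where
  "class_K f \<longleftrightarrow> class_P f \<and> strict_mono_on {0..} f"

definition class_Kinf :: "(real \<Rightarrow> real) \<Rightarrow> bool" where
  "class_Kinf f \<longleftrightarrow> class_K f \<and> filterlim f at_top at_top"

definition class_KL :: "(real \<Rightarrow> real \<Rightarrow> real) \<Rightarrow> bool" where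
  "class_KL \<beta> \<longleftrightarrow>
     continuous_on ({0..} \<times> {0..}) (\<lambda>(r,t). \<beta> r t) \<and>
     (\<forall>t\<ge>0. class_K (\<lambda>r. \<beta> r t)) \<and>
     (\<forall>r>0. continuous_on {0..} (\<beta> r) \<and>
            (\<forall>s t. 0 \<le> s \<longrightarrow> s < t \<longrightarrow> \<beta> r t < \<beta> r s) \<and>
            (\<beta> r \<longlongrightarrow> 0) at_top)"

definition PC :: "(real \<Rightarrow> 'u::real_normed_vector) set" where
  "PC = {u. bounded (u ` {0..}) \<and>
            (\<forall>t\<ge>0. continuous (at_right t) u) \<and>
            (\<forall>t>0. \<exists>l. (u \<longlongrightarrow> l) (at_left t)) \<and>
            (\<forall>t. \<not> t islimpt {s\<in>{0..}. \<not> continuous (at s within {0..}) u})}"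

definition input_norm :: "(real \<Rightarrow> 'u::real_normed_vector) \<Rightarrow> real" where
  "input_norm u = (SUP s\<in>{0..}. norm (u s))"

text \<open>phi t t0 x0 u is the state at time t; it is meaningful for t0 \<ge> 0 and
  t0 \<le> t < tm t0 x0 u (maximal existence time, an extended real).\<close>

definition dom_phi :: "(real \<Rightarrow> 'x \<Rightarrow> (real \<Rightarrow> 'u) \<Rightarrow> ereal) \<Rightarrow> real \<Rightarrow> 'x \<Rightarrow> (real \<Rightarrow> 'u) \<Rightarrow> real set" where
  "dom_phi tm t0 x0 u = {t. t0 \<le> t \<and> ereal t < tm t0 x0 u}"

definition control_system ::
  "(real \<Rightarrow> real \<Rightarrow> 'x::real_normed_vector \<Rightarrow> (real \<Rightarrow> 'u::real_normed_vector) \<Rightarrow> 'x)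
   \<Rightarrow> (real \<Rightarrow> 'x \<Rightarrow> (real \<Rightarrow> 'u) \<Rightarrow> ereal) \<Rightarrow> bool" where
  "control_system phi tm \<longleftrightarrow>
     (\<forall>t0\<ge>0. \<forall>x0. \<forall>u\<in>PC. ereal t0 < tm t0 x0 u) \<and>
     (\<forall>t0\<ge>0. \<forall>x0. \<forall>u\<in>PC. phi t0 t0 x0 u = x0) \<and>
     (\<forall>t0\<ge>0. \<forall>x0. \<forall>u\<in>PC. \<forall>v\<in>PC. \<forall>t \<in> dom_phi tm t0 x0 u.
        (\<forall>s. t0 \<le> s \<and> s < t \<longrightarrow> u s = v s) \<longrightarrow>
        t \<in> dom_phi tm t0 x0 v \<and> phi t t0 x0 v = phi t t0 x0 u) \<and>
     (\<forall>t0\<ge>0. \<forall>x0. \<forall>u\<in>PC. continuous_on (dom_phi tm t0 x0 u) (\<lambda>t. phi t t0 x0 u)) \<and>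
     (\<forall>t0\<ge>0. \<forall>x0. \<forall>u\<in>PC. \<forall>\<tau> t. t0 \<le> \<tau> \<longrightarrow> \<tau> \<le> t \<longrightarrow> ereal t < tm t0 x0 u \<longrightarrow>
        t \<in> dom_phi tm \<tau> (phi \<tau> t0 x0 u) u \<and>
        phi t \<tau> (phi \<tau> t0 x0 u) u = phi t t0 x0 u)"

definition forward_complete :: "(real \<Rightarrow> 'x \<Rightarrow> (real \<Rightarrow> 'u::real_normed_vector) \<Rightarrow> ereal) \<Rightarrow> bool" where
  "forward_complete tm \<longleftrightarrow> (\<forall>t0\<ge>0. \<forall>x0. \<forall>u\<in>PC. tm t0 x0 u = \<infinity>)"

definition BIC ::
  "(real \<Rightarrow> real \<Rightarrow> 'x::real_normed_vector \<Rightarrow> (real \<Rightarrow> 'u::real_normed_vector) \<Rightarrow> 'x)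
   \<Rightarrow> (real \<Rightarrow> 'x \<Rightarrow> (real \<Rightarrow> 'u) \<Rightarrow> ereal) \<Rightarrow> bool" where
  "BIC phi tm \<longleftrightarrow> (\<forall>t0\<ge>0. \<forall>x0. \<forall>u\<in>PC. tm t0 x0 u < \<infinity> \<longrightarrow>
      \<not> bounded ((\<lambda>t. phi t t0 x0 u) ` dom_phi tm t0 x0 u))"

definition lie_deriv ::
  "(real \<Rightarrow> real \<Rightarrow> 'x::real_normed_vector \<Rightarrow> (real \<Rightarrow> 'u) \<Rightarrow> 'x)
   \<Rightarrow> (real \<Rightarrow> 'x \<Rightarrow> real) \<Rightarrow> (real \<Rightarrow> 'u) \<Rightarrow> real \<Rightarrow> 'x \<Rightarrow> ereal" where
  "lie_deriv phi V u t x =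
     Limsup (at_right 0) (\<lambda>h. ereal ((V (t + h) (phi (t + h) t x u) - V t x) / h))"

definition coercive_iISS_LF_with ::
  "(real \<Rightarrow> real \<Rightarrow> 'x::real_normed_vector \<Rightarrow> (real \<Rightarrow> 'u::real_normed_vector) \<Rightarrow> 'x)
   \<Rightarrow> (real \<Rightarrow> 'x \<Rightarrow> real) \<Rightarrow> (real \<Rightarrow> real) \<Rightarrow> (real \<Rightarrow> real) \<Rightarrow> bool" where
  "coercive_iISS_LF_with phi V eta chi \<longleftrightarrow>
     continuous_on ({0..} \<times> UNIV) (\<lambda>(t,x). V t x) \<and>
     (\<forall>t\<ge>0. \<forall>x. V t x \<ge> 0) \<and> (\<forall>t\<ge>0. V t 0 = 0) \<and>
     class_P eta \<and> class_K chi \<and>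
     (\<exists>\<alpha>1 \<alpha>2. class_Kinf \<alpha>1 \<and> class_Kinf \<alpha>2 \<and>
        (\<forall>t\<ge>0. \<forall>x. \<alpha>1 (norm x) \<le> V t x \<and> V t x \<le> \<alpha>2 (norm x))) \<and>
     (\<forall>x. \<forall>u\<in>PC. \<forall>t\<ge>0.
        lie_deriv phi V u t x \<le> ereal (- eta (norm x) + chi (norm (u t))))"

definition coercive_iISS_LF where
  "coercive_iISS_LF phi V \<longleftrightarrow> (\<exists>eta chi. coercive_iISS_LF_with phi V eta chi)"

definition coercive_ISS_LF_diss where
  "coercive_ISS_LF_diss phi V \<longleftrightarrow> (\<exists>eta chi. coercive_iISS_LF_with phi V eta chi \<and>
     (filterlim eta at_top at_top \<or>
      Liminf at_top (\<lambda>\<tau>. ereal (eta \<tau>)) \<ge> Lim at_top (\<lambda>\<tau>. ereal (chi \<tau>))))"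

definition iISS ::
  "(real \<Rightarrow> real \<Rightarrow> 'x::real_normed_vector \<Rightarrow> (real \<Rightarrow> 'u::real_normed_vector) \<Rightarrow> 'x) \<Rightarrow> bool" where
  "iISS phi \<longleftrightarrow> (\<exists>\<alpha> \<mu> \<beta>. class_Kinf \<alpha> \<and> class_K \<mu> \<and> class_KL \<beta> \<and>
     (\<forall>x0. \<forall>u\<in>PC. \<forall>t0 t. 0 \<le> t0 \<longrightarrow> t0 \<le> t \<longrightarrow>
        norm (phi t t0 x0 u) \<le> \<beta> (norm x0) (t - t0) + \<alpha> (integral {t0..t} (\<lambda>s. \<mu> (norm (u s))))))"

definition ISS ::
  "(real \<Rightarrow> real \<Rightarrow> 'x::real_normed_vector \<Rightarrow> (real \<Rightarrow> 'u::real_normed_vector) \<Rightarrow> 'x)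
   \<Rightarrow> (real \<Rightarrow> 'x \<Rightarrow> (real \<Rightarrow> 'u) \<Rightarrow> ereal) \<Rightarrow> bool" where
  "ISS phi tm \<longleftrightarrow> (\<exists>\<beta> \<gamma>. class_KL \<beta> \<and> class_K \<gamma> \<and>
     (\<forall>x0. \<forall>u\<in>PC. \<forall>t0\<ge>0. tm t0 x0 u = \<infinity> \<and>
        (\<forall>t\<ge>t0. norm (phi t t0 x0 u) \<le> \<beta> (norm x0) (t - t0) + \<gamma> (input_norm u))))"

end

theory Submission
  imports Defs
begin

lemma mono_integrable_Icc:
  fixes g :: "real \<Rightarrow> real"
  assumes "mono g"
  shows "g integrable_on {a..b}"
  apply (rule integrable_on_mono_on)
  using assms unfolding mono_on_def mono_def by blast

lemma smooth_bounds:
  fixes g :: "real \<Rightarrow> real"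
  assumes "mono g"
  shows "g \<tau> \<le> integral {\<tau>..\<tau>+1} g \<and> integral {\<tau>..\<tau>+1} g \<le> g (\<tau>+1)"
proof
  have "integral {\<tau>..\<tau>+1} (\<lambda>_. g \<tau>) \<le> integral {\<tau>..\<tau>+1} g"
    by (rule integral_le) (auto intro: mono_integrable_Icc assms monoD[OF assms])
  then show "g \<tau> \<le> integral {\<tau>..\<tau>+1} g" by simp
  have "integral {\<tau>..\<tau>+1} g \<le> integral {\<tau>..\<tau>+1} (\<lambda>_. g (\<tau>+1))"
    by (rule integral_le) (auto intro: mono_integrable_Icc assms monoD[OF assms])
  then show "integral {\<tau>..\<tau>+1} g \<le> g (\<tau>+1)" by simp
qed

lemma smooth_shift:
  fixes g :: "real \<Rightarrow> real"
  shows "integral {\<tau>..\<tau>+1} g = integral {0..1} (\<lambda>x. g (x + \<tau>))"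
  using integral_shift_real_ivl[of "\<tau>" \<tau> "\<tau>+1" g] by simp

lemma smooth_mono:
  fixes g :: "real \<Rightarrow> real"
  assumes "mono g"
  shows "mono (\<lambda>\<tau>. integral {\<tau>..\<tau>+1} g)"
proof (rule monoI)
  fix a b :: real assume "a \<le> b"
  have m: "mono (\<lambda>x. g (x + c))" for c
    by (rule monoI) (auto intro: monoD[OF assms])
  have "integral {0..1} (\<lambda>x. g (x + a)) \<le> integral {0..1} (\<lambda>x. g (x + b))"
    by (rule integral_le) (auto intro: mono_integrable_Icc m monoD[OF assms] simp: \<open>a \<le> b\<close>)
  then show "integral {a..a+1} g \<le> integral {b..b+1} g"
    by (simp add: smooth_shift)
qed

lemma smooth_cont:
  fixes g :: "real \<Rightarrow> real"
  assumes "mono g"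
  shows "continuous_on UNIV (\<lambda>\<tau>. integral {\<tau>..\<tau>+1} g)"
proof (rule continuous_at_imp_continuous_on, intro ballI)
  fix t0 :: real
  let ?a = "t0 - 1"
  have int: "g integrable_on {?a..t0+2}" by (rule mono_integrable_Icc[OF assms])
  have c1: "continuous_on {?a..t0+2} (\<lambda>x. integral {?a..x} g)"
    by (rule indefinite_integral_continuous_1[OF int])
  have c2: "continuous_on {?a..t0+1} (\<lambda>x. integral {?a..x+1} g)"
  proof (rule continuous_on_compose2[OF c1, of _ "\<lambda>x. x+1"])
    show "continuous_on {?a..t0+1} (\<lambda>x. x+1)" by (intro continuous_on_add continuous_on_id continuous_on_const)
  qed auto
  have c3: "continuous_on {?a..t0+1} (\<lambda>x. integral {?a..x} g)"
    by (rule continuous_on_subset[OF c1]) auto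
  have eq: "integral {x..x+1} g = integral {?a..x+1} g - integral {?a..x} g" if "x \<in> {?a..t0+1}" for x
  proof -
    have "integral {?a..x} g + integral {x..x+1} g = integral {?a..x+1} g"
      apply (rule Henstock_Kurzweil_Integration.integral_combine)
      using that mono_integrable_Icc[OF assms] by auto
    then show ?thesis by simp
  qed
  have "continuous_on {?a..t0+1} (\<lambda>x. integral {x..x+1} g)"
    by (rule continuous_on_eq[OF continuous_on_diff[OF c2 c3]]) (use eq in auto)
  then have "continuous_on {?a<..<t0+1} (\<lambda>x. integral {x..x+1} g)"
    by (rule continuous_on_subset) auto
  then show "isCont (\<lambda>x. integral {x..x+1} g) t0"
    by (rule continuous_on_interior) auto
qed

lemma K_majorant:
  fixes f :: "real \<Rightarrow> real"
  assumes fm: "mono_on {0<..} f"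
    and f0: "\<forall>\<epsilon>>0. \<exists>\<delta>>0. \<forall>s. 0<s \<longrightarrow> s<\<delta> \<longrightarrow> f s \<le> \<epsilon>"
  shows "\<exists>\<gamma>. class_Kinf \<gamma> \<and> continuous_on UNIV \<gamma> \<and> mono \<gamma> \<and> (\<forall>s>0. f s < \<gamma> s) \<and> \<gamma> 0 = 0"
proof -
  define g where "g = (\<lambda>\<tau>. f (exp \<tau>))"
  have mg: "mono g" unfolding g_def
    by (rule monoI) (use fm in \<open>auto simp: mono_on_def\<close>)
  define G where "G = (\<lambda>\<tau>. integral {\<tau>..\<tau>+1} g)"
  have Gb: "g \<tau> \<le> G \<tau> \<and> G \<tau> \<le> g (\<tau>+1)" for \<tau> unfolding G_def by (rule smooth_bounds[OF mg])
  have Gm: "mono G" unfolding G_def by (rule smooth_mono[OF mg])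
  have Gc: "continuous_on UNIV G" unfolding G_def by (rule smooth_cont[OF mg])
  define k where "k = (\<lambda>s::real. if 0 < s then max 0 (G (ln s)) else 0)"
  define \<gamma> where "\<gamma> = (\<lambda>s. k s + s)"
  have k0: "0 \<le> k s" for s unfolding k_def by auto
  have km: "mono k"
  proof (rule monoI)
    fix a b :: real assume "a \<le> b"
    show "k a \<le> k b"
    proof (cases "0 < a")
      case True
      then have "ln a \<le> ln b" using \<open>a \<le> b\<close> by simp
      then have "G (ln a) \<le> G (ln b)" by (rule monoD[OF Gm])
      then show ?thesis using True \<open>a \<le> b\<close> unfolding k_def by auto
    next
      case False
      then show ?thesis unfolding k_def by auto
    qed
  qed
  have fk: "f s \<le> k s" if "s > 0" for s
  proof -
    have "f s = g (ln s)" unfolding g_def using that by simp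
    also have "\<dots> \<le> G (ln s)" using Gb by blast
    finally show ?thesis unfolding k_def using that by auto
  qed
  have ksmall: "k s \<le> \<epsilon>" if "\<epsilon> > 0"
    and "\<forall>s. 0<s \<longrightarrow> s<\<delta> \<longrightarrow> f s \<le> \<epsilon>" and "s * exp 1 < \<delta>" for \<epsilon> s \<delta> :: real
  proof (cases "0 < s")
    case True
    have "G (ln s) \<le> g (ln s + 1)" using Gb by blast
    also have "\<dots> = f (s * exp 1)" unfolding g_def using True by (simp add: exp_add)
    also have "\<dots> \<le> \<epsilon>" using that True by auto
    finally show ?thesis unfolding k_def using True \<open>\<epsilon> > 0\<close> by auto
  next
    case False
    then show ?thesis unfolding k_def using \<open>\<epsilon> > 0\<close> by auto
  qed
  have kc: "isCont k x" for x
  proof -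
    consider "x < 0" | "x = 0" | "x > 0" by linarith
    then show ?thesis
    proof cases
      case 1
      have "eventually (\<lambda>s. s \<in> {..<0}) (nhds x)"
        by (rule eventually_nhds_in_open) (use 1 in auto)
      then have "eventually (\<lambda>s. k s = (\<lambda>_. 0) s) (nhds x)"
        by eventually_elim (auto simp: k_def)
      then show ?thesis by (subst isCont_cong) auto
    next
      case 3
      have "eventually (\<lambda>s. s \<in> {0<..}) (nhds x)"
        by (rule eventually_nhds_in_open) (use 3 in auto)
      then have "eventually (\<lambda>s. k s = (\<lambda>s. max 0 (G (ln s))) s) (nhds x)"
        by eventually_elim (auto simp: k_def)
      moreover have "isCont (\<lambda>s. max 0 (G (ln s))) x"
      proof -
        have "isCont G (ln x)" using Gc by (simp add: continuous_on_eq_continuous_at)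
        moreover have "isCont ln x" using 3 by (intro continuous_intros) auto
        ultimately have "isCont (\<lambda>s. G (ln s)) x" using isCont_o2 by blast
        then show ?thesis by (intro continuous_max continuous_const)
      qed
      ultimately show ?thesis by (subst isCont_cong) auto
    next
      case 2
      have "(k \<longlongrightarrow> 0) (at 0)"
        unfolding LIM_eq
      proof (intro allI impI)
        fix r :: real assume "r > 0"
        then obtain \<delta> where "\<delta> > 0" and d: "\<forall>s. 0<s \<longrightarrow> s<\<delta> \<longrightarrow> f s \<le> r/2"
          using f0 by (meson half_gt_zero)
        show "\<exists>s>0. \<forall>x. x \<noteq> 0 \<and> norm (x - 0) < s \<longrightarrow> norm (k x - 0) < r"
        proof (intro exI[of _ "\<delta> / exp 1"] conjI allI impI)
          show "0 < \<delta> / exp 1" using \<open>\<delta> > 0\<close> by simp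
          fix y :: real assume "y \<noteq> 0 \<and> norm (y - 0) < \<delta> / exp 1"
          then have "y * exp 1 < \<delta>"
            by (smt (verit, ccfv_SIG) exp_gt_zero le_divide_eq mult_le_cancel_right_pos real_norm_def)
          then have "k y \<le> r/2" using ksmall[of "r/2" \<delta> y] \<open>r>0\<close> d by auto
          then show "norm (k y - 0) < r" using k0[of y] \<open>r>0\<close> by simp
        qed
      qed
      moreover have "k 0 = 0" unfolding k_def by simp
      ultimately show ?thesis using 2 by (simp add: isCont_def)
    qed
  qed
  have gc: "continuous_on UNIV \<gamma>"
    unfolding \<gamma>_def by (intro continuous_at_imp_continuous_on ballI continuous_add kc continuous_ident)
  have gm: "mono \<gamma>" unfolding \<gamma>_def using km by (auto simp: mono_def add_mono)
  have gsm: "strict_mono_on {0..} \<gamma>"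
    unfolding \<gamma>_def strict_mono_on_def
  proof (intro allI impI)
    fix r s :: real assume "r \<in> {0..} \<and> s \<in> {0..} \<and> r < s"
    then have "k r \<le> k s" "r < s" using monoD[OF km, of r s] by auto
    then show "k r + r < k s + s" by linarith
  qed
  have g00: "\<gamma> 0 = 0" unfolding \<gamma>_def k_def by simp
  have gpos: "\<forall>r>0. \<gamma> r > 0" unfolding \<gamma>_def using k0 by (smt (verit))
  have "class_Kinf \<gamma>"
    unfolding class_Kinf_def class_K_def class_P_def
  proof (intro conjI)
    show "continuous_on {0..} \<gamma>" using gc by (rule continuous_on_subset) auto
    show "filterlim \<gamma> at_top at_top"
      by (rule filterlim_at_top_mono[OF filterlim_ident]) (auto simp: \<gamma>_def k0)
  qed (use g00 gpos gsm in auto)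
  moreover have "\<forall>s>0. f s < \<gamma> s" using fk unfolding \<gamma>_def by force
  ultimately show ?thesis using gc gm g00 by blast
qed

lemma dini_comparison:
  fixes y g :: "real \<Rightarrow> real"
  assumes ab: "a \<le> b"
    and yc: "continuous_on {a..b} y"
    and gi: "g integrable_on {a..b}"
    and gr: "\<forall>t\<in>{a..<b}. continuous (at_right t) g"
    and D: "\<forall>t\<in>{a..<b}. Limsup (at_right 0) (\<lambda>h. ereal ((y (t+h) - y t)/h)) \<le> ereal (g t)"
  shows "y b - y a \<le> integral {a..b} g"
proof (rule field_le_epsilon)
  fix e :: real assume "0 < e"
  define \<epsilon> where "\<epsilon> = e / (b - a + 1)"
  have "\<epsilon> > 0" unfolding \<epsilon>_def using \<open>0 < e\<close> ab by simp
  have epsb: "\<epsilon> * (b - a) \<le> e" unfolding \<epsilon>_def using \<open>0 < e\<close> ab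
    by (simp add: field_simps)
  define z where "z = (\<lambda>t. y t - integral {a..t} g - \<epsilon> * (t - a))"
  have za: "z a = y a" unfolding z_def by simp
  have zc: "continuous_on {a..b} z" unfolding z_def
    by (intro continuous_on_diff yc indefinite_integral_continuous_1[OF gi] continuous_on_mult
        continuous_on_const continuous_on_id)
  have "z b \<le> z a"
  proof (rule ccontr)
    assume "\<not> z b \<le> z a"
    then have zba: "z b > z a" by simp
    define S where "S = {t\<in>{a..b}. z t \<le> z a}"
    have Sc: "closed S" unfolding S_def
      by (rule continuous_on_closed_Collect_le[OF zc continuous_on_const]) simp
    have "a \<in> S" unfolding S_def using ab by simp
    then have Sne: "S \<noteq> {}" by auto
    have Sb: "bdd_above S" unfolding S_def by (rule bdd_aboveI[of _ b]) auto
    define s where "s = Sup S"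
    have sS: "s \<in> S" unfolding s_def by (rule closed_contains_Sup[OF Sne Sb Sc])
    then have s1: "a \<le> s" "s \<le> b" "z s \<le> z a" unfolding S_def by auto
    have "s \<noteq> b" using s1 zba by auto
    then have sb: "s < b" using s1 by simp
    have Ds: "Limsup (at_right 0) (\<lambda>h. ereal ((y (s+h) - y s)/h)) < ereal (g s + \<epsilon>/2)"
    proof -
      have "Limsup (at_right 0) (\<lambda>h. ereal ((y (s+h) - y s)/h)) \<le> ereal (g s)"
        using D sb s1 by simp
      also have "\<dots> < ereal (g s + \<epsilon>/2)" using \<open>\<epsilon> > 0\<close> by simp
      finally show ?thesis .
    qed
    have E1: "eventually (\<lambda>h. ereal ((y (s+h) - y s)/h) < ereal (g s + \<epsilon>/2)) (at_right 0)"
      by (rule Limsup_lessD[OF Ds])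
    have "(g \<longlongrightarrow> g s) (at_right s)"
      using gr sb s1 by (simp add: continuous_within)
    then have "eventually (\<lambda>\<tau>. dist (g \<tau>) (g s) < \<epsilon>/2) (at_right s)"
      using \<open>\<epsilon> > 0\<close> unfolding tendsto_iff by (meson half_gt_zero)
    then obtain \<delta> where "\<delta> > s" and dl: "\<And>\<tau>. \<tau> > s \<Longrightarrow> \<tau> < \<delta> \<Longrightarrow> dist (g \<tau>) (g s) < \<epsilon>/2"
      unfolding eventually_at_right_field by blast
    have E2: "eventually (\<lambda>h. 0 < h \<and> h < min (b - s) (\<delta> - s)) (at_right (0::real))"
      unfolding eventually_at_right_field
      by (rule exI[of _ "min (b - s) (\<delta> - s)"]) (use sb \<open>\<delta> > s\<close> in auto)
    have "eventually (\<lambda>h. ereal ((y (s+h) - y s)/h) < ereal (g s + \<epsilon>/2) \<and> 0 < h \<and> h < min (b - s) (\<delta> - s)) (at_right (0::real))"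
      using E1 E2 by eventually_elim auto
    then obtain h where h1: "(y (s+h) - y s)/h < g s + \<epsilon>/2" and h2: "0 < h" "h < b - s" "h < \<delta> - s"
      using eventually_happens[of _ "at_right (0::real)"] by auto
    have gsub: "g integrable_on {c..d}" if "a \<le> c" "d \<le> b" for c d
      by (rule integrable_on_subinterval[OF gi]) (use that in auto)
    have Ih: "h * (g s - \<epsilon>/2) \<le> integral {s..s+h} g"
    proof -
      have "integral {s..s+h} (\<lambda>_. g s - \<epsilon>/2) \<le> integral {s..s+h} g"
      proof (rule integral_le)
        show "g integrable_on {s..s+h}" using gsub s1 h2 by simp
        fix \<tau> assume "\<tau> \<in> {s..s+h}"
        then consider "\<tau> = s" | "s < \<tau>" "\<tau> < \<delta>" using h2 by force
        then show "g s - \<epsilon>/2 \<le> g \<tau>"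
        proof cases
          case 1 then show ?thesis using \<open>\<epsilon> > 0\<close> by simp
        next
          case 2 then show ?thesis using dl[of \<tau>] unfolding dist_real_def by linarith
        qed
      qed (rule integrable_const_ivl)
      then show ?thesis using h2 by simp
    qed
    have comb: "integral {a..s} g + integral {s..s+h} g = integral {a..s+h} g"
      by (rule Henstock_Kurzweil_Integration.integral_combine) (use s1 h2 gsub in auto)
    have "y (s+h) - y s < h * (g s + \<epsilon>/2)"
      using h1 h2 by (simp add: pos_divide_less_eq mult.commute)
    then have "z (s+h) < z s"
      unfolding z_def using Ih comb by (simp add: algebra_simps)
    then have "s + h \<in> S" unfolding S_def using s1 h2 by auto
    then have "s + h \<le> s" unfolding s_def by (rule cSup_upper[OF _ Sb])
    then show False using h2 by simp
  qed
  then have "y b - integral {a..b} g - \<epsilon> * (b - a) \<le> y a" using za unfolding z_def by simp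
  then show "y b - y a \<le> integral {a..b} g + e" using epsb by linarith
qed

lemma classK_nonneg: "class_K f \<Longrightarrow> 0 \<le> r \<Longrightarrow> 0 \<le> f r"
  unfolding class_K_def class_P_def
  by (metis less_eq_real_def order_refl)

lemma classK_pos: "class_K f \<Longrightarrow> 0 < r \<Longrightarrow> 0 < f r"
  unfolding class_K_def class_P_def by auto

lemma classK_mono: "class_K f \<Longrightarrow> 0 \<le> a \<Longrightarrow> a \<le> b \<Longrightarrow> f a \<le> f b"
  unfolding class_K_def strict_mono_on_def by (cases "a = b") (auto intro: less_imp_le)

lemma classK_less: "class_K f \<Longrightarrow> 0 \<le> a \<Longrightarrow> a < b \<Longrightarrow> f a < f b"
  unfolding class_K_def strict_mono_on_def by auto

lemma classK_cont: "class_K f \<Longrightarrow> continuous_on {0..} f"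
  unfolding class_K_def class_P_def by auto

lemma PC_norm_le:
  assumes "u \<in> PC" "0 \<le> t"
  shows "norm (u t) \<le> input_norm u"
proof -
  have "bounded (u ` {0..})" using assms unfolding PC_def by auto
  then have "bdd_above ((\<lambda>s. norm (u s)) ` {0..})"
    by (metis (no_types, lifting) bdd_aboveI2 bounded_iff imageI)
  then show ?thesis unfolding input_norm_def
    using assms(2) by (intro cSUP_upper) auto
qed

lemma PC_right_cont:
  assumes "u \<in> PC" "class_K chi" "0 \<le> t"
  shows "continuous (at_right t) (\<lambda>\<tau>. chi (norm (u \<tau>)))"
proof -
  have "continuous (at_right t) u" using assms unfolding PC_def by auto
  then have "(u \<longlongrightarrow> u t) (at_right t)" by (simp add: continuous_within)
  then have "((\<lambda>\<tau>. norm (u \<tau>)) \<longlongrightarrow> norm (u t)) (at_right t)" by (rule tendsto_norm)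
  then have "((\<lambda>\<tau>. chi (norm (u \<tau>))) \<longlongrightarrow> chi (norm (u t))) (at_right t)"
    by (rule continuous_on_tendsto_compose[OF classK_cont[OF assms(2)]]) auto
  then show ?thesis by (simp add: continuous_within)
qed

lemma PC_integrable:
  assumes "u \<in> PC" "class_K chi" "0 \<le> a"
  shows "(\<lambda>\<tau>. chi (norm (u \<tau>))) integrable_on {a..b}"
proof -
  define Dc where "Dc = {s\<in>{0..}. \<not> continuous (at s within {0..}) u}"
  define F where "F = Dc \<inter> {a..b}"
  have nl: "\<not> x islimpt Dc" for x using assms(1) unfolding PC_def Dc_def by auto
  have fin: "finite F"
  proof (rule ccontr)
    assume "infinite F"
    moreover have "F \<subseteq> {a..b}" unfolding F_def by auto
    ultimately obtain x where "x islimpt F"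
      using compact_eq_Bolzano_Weierstrass[of "{a..b::real}"] by auto
    then have "x islimpt Dc" by (rule islimpt_subset) (auto simp: F_def)
    then show False using nl by blast
  qed
  define f where "f = (\<lambda>\<tau>. chi (norm (u \<tau>)))"
  have cu: "continuous_on ({a..b} - F) u"
    unfolding continuous_on_eq_continuous_within
  proof (intro ballI)
    fix x assume x: "x \<in> {a..b} - F"
    then have "x \<ge> 0" using assms(3) by auto
    then have "continuous (at x within {0..}) u" using x unfolding F_def Dc_def by auto
    then show "continuous (at x within ({a..b} - F)) u"
      by (rule continuous_within_subset) (use assms(3) in auto)
  qed
  have cf: "continuous_on ({a..b} - F) f" unfolding f_def
    by (rule continuous_on_compose2[OF classK_cont[OF assms(2)] continuous_on_norm[OF cu]]) auto
  have leb: "{a..b} - F \<in> sets lebesgue"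
    using fin by (intro sets.Diff) (auto intro: negligible_imp_sets)
  have "f \<in> borel_measurable (lebesgue_on ({a..b} - F))"
    by (rule continuous_imp_measurable_on_sets_lebesgue[OF cf leb])
  then have "f measurable_on ({a..b} - F)"
    using measurable_on_iff_borel_measurable[OF leb] by blast
  then have "f measurable_on {a..b}"
    by (rule measurable_on_spike_set) (use fin in \<open>auto intro: negligible_subset[of F]\<close>)
  then have fm: "f \<in> borel_measurable (lebesgue_on {a..b})"
    using measurable_on_iff_borel_measurable[of "{a..b}"] by auto
  have bnd: "norm (f x) \<le> chi (input_norm u)" if "x \<in> {a..b}" for x
  proof -
    have "0 \<le> x" using that assms(3) by auto
    then have "norm (u x) \<le> input_norm u" by (rule PC_norm_le[OF assms(1)])
    then have "chi (norm (u x)) \<le> chi (input_norm u)" by (rule classK_mono[OF assms(2) norm_ge_zero])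
    moreover have "0 \<le> chi (norm (u x))" by (rule classK_nonneg[OF assms(2) norm_ge_zero])
    ultimately show ?thesis unfolding f_def by simp
  qed
  have "f integrable_on {a..b}"
    by (rule measurable_bounded_by_integrable_imp_integrable[OF fm integrable_const_ivl bnd]) auto
  then show ?thesis unfolding f_def .
qed

lemma cs_cocycle:
  assumes "control_system phi tm" "0 \<le> t0" "u \<in> PC" "t0 \<le> \<tau>" "\<tau> \<le> t" "ereal t < tm t0 x0 u"
  shows "phi t \<tau> (phi \<tau> t0 x0 u) u = phi t t0 x0 u"
proof -
  from assms(1) have "\<forall>t0\<ge>0. \<forall>x0. \<forall>u\<in>PC. \<forall>\<tau> t. t0 \<le> \<tau> \<longrightarrow> \<tau> \<le> t \<longrightarrow> ereal t < tm t0 x0 u \<longrightarrow>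
        t \<in> dom_phi tm \<tau> (phi \<tau> t0 x0 u) u \<and>
        phi t \<tau> (phi \<tau> t0 x0 u) u = phi t t0 x0 u"
    unfolding control_system_def by (elim conjE)
  then show ?thesis using assms(2-) by blast
qed

lemma cs_cont:
  assumes "control_system phi tm" "0 \<le> t0" "u \<in> PC"
  shows "continuous_on (dom_phi tm t0 x0 u) (\<lambda>t. phi t t0 x0 u)"
proof -
  from assms(1) have "\<forall>t0\<ge>0. \<forall>x0. \<forall>u\<in>PC. continuous_on (dom_phi tm t0 x0 u) (\<lambda>t. phi t t0 x0 u)"
    unfolding control_system_def by (elim conjE)
  then show ?thesis using assms(2-) by blast
qed

lemma cs_init:
  assumes "control_system phi tm" "0 \<le> t0" "u \<in> PC"
  shows "phi t0 t0 x0 u = x0" and "ereal t0 < tm t0 x0 u"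
proof -
  from assms(1) have "\<forall>t0\<ge>0. \<forall>x0. \<forall>u\<in>PC. phi t0 t0 x0 u = x0"
    unfolding control_system_def by (elim conjE)
  then show "phi t0 t0 x0 u = x0" using assms(2-) by blast
  from assms(1) have "\<forall>t0\<ge>0. \<forall>x0. \<forall>u\<in>PC. ereal t0 < tm t0 x0 u"
    unfolding control_system_def by (elim conjE)
  then show "ereal t0 < tm t0 x0 u" using assms(2-) by blast
qed

lemma LF_parts:
  assumes "coercive_iISS_LF_with phi V eta chi"
  shows "continuous_on ({0..} \<times> UNIV) (\<lambda>(t,x). V t x)"
    and "\<And>t x. 0 \<le> t \<Longrightarrow> V t x \<ge> 0"
    and "class_P eta" and "class_K chi"
    and "\<exists>\<alpha>1 \<alpha>2. class_Kinf \<alpha>1 \<and> class_Kinf \<alpha>2 \<and>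
        (\<forall>t\<ge>0. \<forall>x. \<alpha>1 (norm x) \<le> V t x \<and> V t x \<le> \<alpha>2 (norm x))"
    and "\<And>x u t. u \<in> PC \<Longrightarrow> 0 \<le> t \<Longrightarrow>
        lie_deriv phi V u t x \<le> ereal (- eta (norm x) + chi (norm (u t)))"
  using assms unfolding coercive_iISS_LF_with_def by auto

lemma traj_bound:
  fixes phi :: "real \<Rightarrow> real \<Rightarrow> 'x::real_normed_vector \<Rightarrow> (real \<Rightarrow> 'u::real_normed_vector) \<Rightarrow> 'x"
    and tm :: "real \<Rightarrow> 'x \<Rightarrow> (real \<Rightarrow> 'u) \<Rightarrow> ereal"
  assumes cs: "control_system phi tm"
    and LF: "coercive_iISS_LF_with phi V eta chi"
    and t0: "0 \<le> t0" and u: "u \<in> PC"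
    and st: "t0 \<le> s" "s \<le> t" and tt: "ereal t < tm t0 x0 u"
    and m: "\<forall>\<tau>\<in>{s..t}. m \<le> eta (norm (phi \<tau> t0 x0 u))"
  shows "V t (phi t t0 x0 u) - V s (phi s t0 x0 u) \<le> - m * (t - s) + integral {s..t} (\<lambda>\<tau>. chi (norm (u \<tau>)))"
proof -
  have chiK: "class_K chi" by (rule LF_parts(4)[OF LF])
  have Vc: "continuous_on ({0..} \<times> UNIV) (\<lambda>(t,x). V t x)" by (rule LF_parts(1)[OF LF])
  have lie: "\<And>x \<tau>. 0 \<le> \<tau> \<Longrightarrow> lie_deriv phi V u \<tau> x \<le> ereal (- eta (norm x) + chi (norm (u \<tau>)))"
    by (rule LF_parts(6)[OF LF u])
  have phic: "continuous_on (dom_phi tm t0 x0 u) (\<lambda>t. phi t t0 x0 u)"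
    by (rule cs_cont[OF cs t0 u])
  have coc: "\<And>\<tau> t'. t0 \<le> \<tau> \<Longrightarrow> \<tau> \<le> t' \<Longrightarrow> ereal t' < tm t0 x0 u \<Longrightarrow>
      phi t' \<tau> (phi \<tau> t0 x0 u) u = phi t' t0 x0 u"
    by (rule cs_cocycle[OF cs t0 u])
  define y where "y = (\<lambda>\<tau>. V \<tau> (phi \<tau> t0 x0 u))"
  define f where "f = (\<lambda>\<tau>. chi (norm (u \<tau>)))"
  define g where "g = (\<lambda>\<tau>. - m + f \<tau>)"
  have sub: "{s..t} \<subseteq> dom_phi tm t0 x0 u"
  proof
    fix \<tau> assume "\<tau> \<in> {s..t}"
    then have "ereal \<tau> \<le> ereal t" "t0 \<le> \<tau>" using st by auto
    then have "ereal \<tau> < tm t0 x0 u" using order.strict_trans1[OF _ tt] by blast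
    then show "\<tau> \<in> dom_phi tm t0 x0 u" unfolding dom_phi_def using \<open>t0 \<le> \<tau>\<close> by auto
  qed
  have yc: "continuous_on {s..t} y"
  proof -
    have "continuous_on {s..t} (\<lambda>\<tau>. (\<tau>, phi \<tau> t0 x0 u))"
      by (intro continuous_on_Pair continuous_on_id continuous_on_subset[OF phic sub])
    then have "continuous_on {s..t} (\<lambda>\<tau>. (\<lambda>(t,x). V t x) (\<tau>, phi \<tau> t0 x0 u))"
      by (rule continuous_on_compose2[OF Vc]) (use st t0 in auto)
    then show ?thesis unfolding y_def by simp
  qed
  have fi: "f integrable_on {s..t}" unfolding f_def by (rule PC_integrable[OF u chiK]) (use st t0 in auto)
  have gi: "g integrable_on {s..t}" unfolding g_def by (rule integrable_add[OF integrable_const_ivl fi])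
  have gint: "integral {s..t} g = - m * (t - s) + integral {s..t} f"
  proof -
    have "integral {s..t} g = integral {s..t} (\<lambda>_. - m) + integral {s..t} f"
      unfolding g_def by (rule integral_add[OF integrable_const_ivl fi])
    also have "integral {s..t} (\<lambda>_. - m) = - m * (t - s)" using st by simp
    finally show ?thesis .
  qed
  have gr: "\<forall>\<tau>\<in>{s..<t}. continuous (at_right \<tau>) g"
  proof
    fix \<tau> assume "\<tau> \<in> {s..<t}"
    then have "0 \<le> \<tau>" using st t0 by auto
    then show "continuous (at_right \<tau>) g" unfolding g_def f_def
      by (intro continuous_add continuous_const PC_right_cont[OF u chiK])
  qed
  have D: "\<forall>\<tau>\<in>{s..<t}. Limsup (at_right 0) (\<lambda>h. ereal ((y (\<tau>+h) - y \<tau>)/h)) \<le> ereal (g \<tau>)"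
  proof
    fix \<tau> assume tau: "\<tau> \<in> {s..<t}"
    have ev: "eventually (\<lambda>h. ereal ((y (\<tau>+h) - y \<tau>)/h) =
        ereal ((V (\<tau> + h) (phi (\<tau> + h) \<tau> (phi \<tau> t0 x0 u) u) - V \<tau> (phi \<tau> t0 x0 u)) / h)) (at_right 0)"
      unfolding eventually_at_right_field
    proof (intro exI[of _ "t - \<tau>"] conjI allI impI)
      show "0 < t - \<tau>" using tau by auto
      fix h :: real assume "0 < h" "h < t - \<tau>"
      then have "ereal (\<tau> + h) < ereal t" by simp
      then have "ereal (\<tau> + h) < tm t0 x0 u" using tt by (rule order.strict_trans)
      then have "phi (\<tau>+h) \<tau> (phi \<tau> t0 x0 u) u = phi (\<tau>+h) t0 x0 u"
        using coc[of \<tau> "\<tau>+h"] tau st \<open>0 < h\<close> by auto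
      then show "ereal ((y (\<tau>+h) - y \<tau>)/h) =
        ereal ((V (\<tau> + h) (phi (\<tau> + h) \<tau> (phi \<tau> t0 x0 u) u) - V \<tau> (phi \<tau> t0 x0 u)) / h)"
        unfolding y_def by simp
    qed
    have "Limsup (at_right 0) (\<lambda>h. ereal ((y (\<tau>+h) - y \<tau>)/h)) = lie_deriv phi V u \<tau> (phi \<tau> t0 x0 u)"
      unfolding lie_deriv_def by (rule Limsup_eq[OF ev])
    also have "\<dots> \<le> ereal (- eta (norm (phi \<tau> t0 x0 u)) + chi (norm (u \<tau>)))"
      by (rule lie) (use tau st t0 in auto)
    also have "\<dots> \<le> ereal (g \<tau>)" unfolding g_def f_def using m tau by auto
    finally show "Limsup (at_right 0) (\<lambda>h. ereal ((y (\<tau>+h) - y \<tau>)/h)) \<le> ereal (g \<tau>)" .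
  qed
  have "y t - y s \<le> integral {s..t} g"
    by (rule dini_comparison[OF st(2) yc gi gr D])
  then show ?thesis using gint unfolding y_def f_def by simp
qed

definition lbnd :: "(real \<Rightarrow> real) \<Rightarrow> real set \<Rightarrow> real" where
  "lbnd z S = (if S = {} then 1 else min 1 (Inf (z ` S)))"

lemma classP_nonneg: "class_P z \<Longrightarrow> 0 \<le> r \<Longrightarrow> 0 \<le> z r"
  unfolding class_P_def by (metis less_eq_real_def order_refl)

lemma lbnd_le1: "lbnd z S \<le> 1" unfolding lbnd_def by auto

lemma lbnd_bdd: "class_P z \<Longrightarrow> S \<subseteq> {0..} \<Longrightarrow> bdd_below (z ` S)"
  by (rule bdd_belowI[of _ 0]) (auto intro: classP_nonneg)

lemma lbnd_nonneg:
  assumes "class_P z" "S \<subseteq> {0..}"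
  shows "0 \<le> lbnd z S"
proof (cases "S = {}")
  case False
  have "0 \<le> Inf (z ` S)" using False assms
    by (intro cInf_greatest) (auto intro: classP_nonneg)
  then show ?thesis unfolding lbnd_def by auto
qed (auto simp: lbnd_def)

lemma lbnd_le:
  assumes "class_P z" "S \<subseteq> {0..}" "\<rho> \<in> S"
  shows "lbnd z S \<le> z \<rho>"
proof -
  have "Inf (z ` S) \<le> z \<rho>" using assms lbnd_bdd[OF assms(1,2)] by (intro cInf_lower) auto
  then show ?thesis unfolding lbnd_def using assms by auto
qed

lemma lbnd_pos:
  assumes zp: "class_P z" and a: "0 < a" and S: "S \<subseteq> {a..b}"
  shows "0 < lbnd z S"
proof (cases "S = {}")
  case False
  then have ab: "a \<le> b" using S by auto
  have "continuous_on {a..b} z" using zp a unfolding class_P_def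
    by (auto elim: continuous_on_subset)
  then obtain x where x: "x \<in> {a..b}" "\<And>y. y \<in> {a..b} \<Longrightarrow> z x \<le> z y"
    using continuous_attains_inf[of "{a..b}" z] ab by auto
  have "z x > 0" using x a zp unfolding class_P_def by auto
  moreover have "z x \<le> Inf (z ` S)" using False S x by (intro cInf_greatest) auto
  ultimately show ?thesis unfolding lbnd_def using False by auto
qed (auto simp: lbnd_def)

lemma lbnd_anti:
  assumes "class_P z" "S \<subseteq> S'" "S' \<subseteq> {0..}"
  shows "lbnd z S' \<le> lbnd z S"
proof (cases "S = {}")
  case True then show ?thesis by (simp add: lbnd_def)
next
  case False
  then have "S' \<noteq> {}" using assms by auto
  have "Inf (z ` S') \<le> Inf (z ` S)"
    using False assms lbnd_bdd[OF assms(1,3)] by (intro cInf_superset_mono) auto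
  then show ?thesis unfolding lbnd_def using False \<open>S' \<noteq> {}\<close> by auto
qed

definition Afn :: "(real \<Rightarrow> real) \<Rightarrow> (real \<Rightarrow> real) \<Rightarrow> real \<Rightarrow> real" where
  "Afn z a2 c = lbnd z {\<rho>. 0 \<le> \<rho> \<and> \<rho> \<le> 1 \<and> c \<le> a2 \<rho>}"

definition Bfn :: "(real \<Rightarrow> real) \<Rightarrow> (real \<Rightarrow> real) \<Rightarrow> real \<Rightarrow> real" where
  "Bfn z a1 R = lbnd z {\<rho>. 1 \<le> \<rho> \<and> a1 \<rho> \<le> R}"

definition Phifun :: "(real \<Rightarrow> real) \<Rightarrow> (real \<Rightarrow> real) \<Rightarrow> real \<Rightarrow> real" where
  "Phifun z a2 S = Inf ((\<lambda>c. max c (1 - Afn z a2 c * S)) ` {0<..1})"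

lemma A_nonneg: "class_P z \<Longrightarrow> 0 \<le> Afn z a2 c"
  unfolding Afn_def by (rule lbnd_nonneg) auto

lemma B_nonneg: "class_P z \<Longrightarrow> 0 \<le> Bfn z a1 R"
  unfolding Bfn_def by (rule lbnd_nonneg) auto

lemma rate_lb:
  assumes z: "class_P z" and r: "0 \<le> \<rho>" "c \<le> a2 \<rho>" "a1 \<rho> \<le> R"
  shows "Afn z a2 c * Bfn z a1 R \<le> z \<rho>"
proof (cases "\<rho> \<le> 1")
  case True
  have "Afn z a2 c \<le> z \<rho>" unfolding Afn_def by (rule lbnd_le[OF z]) (use r True in auto)
  moreover have "Bfn z a1 R \<le> 1" unfolding Bfn_def by (rule lbnd_le1)
  moreover have "Afn z a2 c * Bfn z a1 R \<le> Afn z a2 c * 1"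
    using mult_left_mono[OF \<open>Bfn z a1 R \<le> 1\<close> A_nonneg[OF z, of a2 c]] .
  ultimately show ?thesis by linarith
next
  case False
  have "Bfn z a1 R \<le> z \<rho>" unfolding Bfn_def by (rule lbnd_le[OF z]) (use r False in auto)
  moreover have "Afn z a2 c \<le> 1" unfolding Afn_def by (rule lbnd_le1)
  moreover have "Afn z a2 c * Bfn z a1 R \<le> 1 * Bfn z a1 R"
    using \<open>Afn z a2 c \<le> 1\<close> B_nonneg[OF z, of a1 R] by (rule mult_right_mono)
  ultimately show ?thesis by linarith
qed

lemma A_pos:
  assumes z: "class_P z" and a2: "class_K a2" and c: "0 < c"
  shows "0 < Afn z a2 c"
proof -
  have "continuous (at 0 within {0..}) a2" using classK_cont[OF a2]
    by (simp add: continuous_on_eq_continuous_within)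
  moreover have "a2 0 = 0" using a2 unfolding class_K_def class_P_def by auto
  ultimately have "(a2 \<longlongrightarrow> 0) (at 0 within {0..})" by (simp add: continuous_within)
  then have "eventually (\<lambda>x. a2 x < c) (at 0 within {0..})" using c by (rule order_tendstoD)
  then obtain d where d: "d > 0" "\<And>x. x \<in> {0..} \<Longrightarrow> x \<noteq> 0 \<Longrightarrow> dist x 0 < d \<Longrightarrow> a2 x < c"
    unfolding eventually_at by blast
  have "{\<rho>. 0 \<le> \<rho> \<and> \<rho> \<le> 1 \<and> c \<le> a2 \<rho>} \<subseteq> {d..1}"
  proof
    fix \<rho> assume "\<rho> \<in> {\<rho>. 0 \<le> \<rho> \<and> \<rho> \<le> 1 \<and> c \<le> a2 \<rho>}"
    then have r: "0 \<le> \<rho>" "\<rho> \<le> 1" "c \<le> a2 \<rho>" by auto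
    have "\<rho> \<noteq> 0" using r c \<open>a2 0 = 0\<close> by auto
    then have "\<not> dist \<rho> 0 < d" using d(2)[of \<rho>] r by auto
    then show "\<rho> \<in> {d..1}" using r by (auto simp: dist_real_def)
  qed
  then show ?thesis unfolding Afn_def by (rule lbnd_pos[OF z d(1)])
qed

lemma B_pos:
  assumes z: "class_P z" and a1: "class_Kinf a1"
  shows "0 < Bfn z a1 R"
proof -
  have "filterlim a1 at_top at_top" using a1 unfolding class_Kinf_def by auto
  then have "eventually (\<lambda>x. a1 x > R) at_top" by (simp add: filterlim_at_top_dense)
  then obtain b where b: "\<And>x. x \<ge> b \<Longrightarrow> a1 x > R" unfolding eventually_at_top_linorder by blast
  have "{\<rho>. 1 \<le> \<rho> \<and> a1 \<rho> \<le> R} \<subseteq> {1..b}"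
  proof
    fix x assume "x \<in> {\<rho>. 1 \<le> \<rho> \<and> a1 \<rho> \<le> R}"
    then have "1 \<le> x" "a1 x \<le> R" by auto
    moreover have "x \<le> b" using b[of x] \<open>a1 x \<le> R\<close> by force
    ultimately show "x \<in> {1..b}" by auto
  qed
  then show ?thesis unfolding Bfn_def by (rule lbnd_pos[OF z zero_less_one])
qed

lemma B_anti:
  assumes z: "class_P z" "R \<le> R'"
  shows "Bfn z a1 R' \<le> Bfn z a1 R"
  unfolding Bfn_def by (rule lbnd_anti[OF z(1)]) (use assms in auto)

lemma Phi_bdd: "class_P z \<Longrightarrow> bdd_below ((\<lambda>c. max c (1 - Afn z a2 c * S)) ` {0<..1})"
  by (rule bdd_belowI[of _ 0]) auto

lemma Phi_le:
  assumes "class_P z" "0 < c" "c \<le> 1"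
  shows "Phifun z a2 S \<le> max c (1 - Afn z a2 c * S)"
  unfolding Phifun_def using assms by (intro cInf_lower Phi_bdd) auto

lemma Phi_great:
  assumes "\<And>c. 0 < c \<Longrightarrow> c \<le> 1 \<Longrightarrow> v \<le> max c (1 - Afn z a2 c * S)"
  shows "v \<le> Phifun z a2 S"
  unfolding Phifun_def using assms by (intro cInf_greatest) auto

lemma Phi_nonneg: "0 \<le> Phifun z a2 S"
  by (rule Phi_great) auto

lemma Phi_anti:
  assumes z: "class_P z" and S: "0 \<le> S" "S \<le> S'"
  shows "Phifun z a2 S' \<le> Phifun z a2 S"
proof (rule Phi_great)
  fix c :: real assume c: "0 < c" "c \<le> 1"
  have "Afn z a2 c * S \<le> Afn z a2 c * S'" using A_nonneg[OF z] S by (simp add: mult_left_mono)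
  then have "max c (1 - Afn z a2 c * S') \<le> max c (1 - Afn z a2 c * S)" by simp
  then show "Phifun z a2 S' \<le> max c (1 - Afn z a2 c * S)" using Phi_le[OF z c, of a2 S'] by linarith
qed

lemma Phi_lim:
  assumes z: "class_P z" and a2: "class_K a2" and e: "\<epsilon> > 0"
  shows "\<exists>S0. \<forall>S\<ge>S0. Phifun z a2 S \<le> \<epsilon>"
proof -
  define c where "c = min \<epsilon> 1"
  have c: "0 < c" "c \<le> 1" "c \<le> \<epsilon>" using e unfolding c_def by auto
  have Ap: "0 < Afn z a2 c" by (rule A_pos[OF z a2 c(1)])
  show ?thesis
  proof (intro exI[of _ "1 / Afn z a2 c"] allI impI)
    fix S assume "1 / Afn z a2 c \<le> S"
    then have "1 \<le> Afn z a2 c * S" using Ap by (simp add: field_simps)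
    then have "max c (1 - Afn z a2 c * S) = c" using c by simp
    then show "Phifun z a2 S \<le> \<epsilon>" using Phi_le[OF z c(1,2), of a2 S] c by simp
  qed
qed

lemma KL_construct:
  fixes \<alpha>2 \<psi> \<Phi> \<sigma> :: "real \<Rightarrow> real"
  assumes a2: "class_K \<alpha>2"
    and psic: "continuous_on UNIV \<psi>" and psim: "mono \<psi>" and psi0: "\<psi> 0 = 0"
    and Phi0: "\<And>S. 0 \<le> S \<Longrightarrow> 0 \<le> \<Phi> S"
    and Phim: "\<And>S S'. 0 \<le> S \<Longrightarrow> S \<le> S' \<Longrightarrow> \<Phi> S' \<le> \<Phi> S"
    and Philim: "\<And>\<epsilon>. \<epsilon> > 0 \<Longrightarrow> \<exists>S0. \<forall>S\<ge>S0. \<Phi> S \<le> \<epsilon>"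
    and sig0: "\<And>r. 0 \<le> r \<Longrightarrow> 0 < \<sigma> r"
    and sigm: "\<And>r r'. 0 \<le> r \<Longrightarrow> r \<le> r' \<Longrightarrow> \<sigma> r' \<le> \<sigma> r"
  shows "\<exists>\<beta>. class_KL \<beta> \<and> (\<forall>r\<ge>0. \<forall>T\<ge>0.
           \<psi> (2 * min (\<alpha>2 r) (max (\<alpha>2 r) 1 * \<Phi> (T * \<sigma> r))) \<le> \<beta> r T)"
proof -
  define Pb where "Pb = (\<lambda>S. \<Phi> (max S 0))"
  have Pbm: "Pb S' \<le> Pb S" if "S \<le> S'" for S S' unfolding Pb_def
    by (rule Phim) (use that in auto)
  define gP where "gP = (\<lambda>\<tau>. - Pb \<tau>)"
  have gPm: "mono gP" unfolding gP_def by (rule monoI) (use Pbm in auto)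
  define Ph where "Ph = (\<lambda>S. - integral {S-1..(S-1)+1} gP)"
  have Phb: "Pb S \<le> Ph S \<and> Ph S \<le> Pb (S - 1)" for S
    using smooth_bounds[OF gPm, of "S-1"] unfolding Ph_def gP_def by auto
  have Phc: "continuous_on UNIV Ph"
  proof -
    have "continuous_on UNIV (\<lambda>S. integral {S-1..(S-1)+1} gP)"
      by (rule continuous_on_compose2[OF smooth_cont[OF gPm]]) (auto intro: continuous_intros)
    then show ?thesis unfolding Ph_def by (rule continuous_on_minus)
  qed
  have Phm: "Ph S' \<le> Ph S" if "S \<le> S'" for S S'
  proof -
    have "integral {S-1..(S-1)+1} gP \<le> integral {S'-1..(S'-1)+1} gP"
      using monoD[OF smooth_mono[OF gPm], of "S-1" "S'-1"] that by simp
    then show ?thesis unfolding Ph_def by simp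
  qed
  have Ph0: "0 \<le> Ph S" for S using Phb[of S] Phi0[of "max S 0"] unfolding Pb_def by auto
  have PhiPh: "\<Phi> S \<le> Ph S" if "0 \<le> S" for S using Phb[of S] that unfolding Pb_def by auto
  have Phlim: "(Ph \<longlongrightarrow> 0) at_top"
  proof (rule order_tendstoI)
    fix a :: real assume "a < 0"
    then show "eventually (\<lambda>S. a < Ph S) at_top" using Ph0 by (auto intro: always_eventually less_le_trans)
  next
    fix a :: real assume "0 < a"
    then have "a/2 > 0" by simp
    then obtain S0 where S0: "\<forall>S\<ge>S0. \<Phi> S \<le> a/2" using Philim by blast
    show "eventually (\<lambda>S. Ph S < a) at_top"
      unfolding eventually_at_top_linorder
    proof (intro exI[of _ "max S0 0 + 1"] allI impI)
      fix S assume "max S0 0 + 1 \<le> S"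
      then have "Ph S \<le> Pb (S - 1)" "Pb (S - 1) = \<Phi> (S - 1)" "S - 1 \<ge> S0"
        using Phb[of S] unfolding Pb_def by auto
      then show "Ph S < a" using S0 \<open>0 < a\<close> by force
    qed
  qed
  define sb where "sb = (\<lambda>r. \<sigma> (max r 0))"
  have sbm: "sb r' \<le> sb r" if "r \<le> r'" for r r' unfolding sb_def
    by (rule sigm) (use that in auto)
  define gs where "gs = (\<lambda>r. - sb r)"
  have gsm: "mono gs" unfolding gs_def by (rule monoI) (use sbm in auto)
  define sh where "sh = (\<lambda>r. - integral {r..r+1} gs)"
  have shb: "sb (r+1) \<le> sh r \<and> sh r \<le> sb r" for r
    using smooth_bounds[OF gsm, of r] unfolding sh_def gs_def by auto
  have shc: "continuous_on UNIV sh" unfolding sh_def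
    by (rule continuous_on_minus[OF smooth_cont[OF gsm]])
  have shm: "sh r' \<le> sh r" if "r \<le> r'" for r r'
    using monoD[OF smooth_mono[OF gsm] that] unfolding sh_def by simp
  have sh0: "0 < sh r" for r using shb[of r] sig0[of "max (r+1) 0"] unfolding sb_def by auto
  have shs: "sh r \<le> \<sigma> r" if "0 \<le> r" for r using shb[of r] that unfolding sb_def by auto
  define \<beta> where "\<beta> = (\<lambda>r T. \<psi> (2 * min (\<alpha>2 r) (max (\<alpha>2 r) 1 * Ph (T * sh r))) + r * exp (- T))"
  have a2c: "continuous_on {0..} \<alpha>2" by (rule classK_cont[OF a2])
  have a2n: "0 \<le> \<alpha>2 r" if "0 \<le> r" for r using classK_nonneg[OF a2 that] .
  have psin: "0 \<le> \<psi> v" if "0 \<le> v" for v using monoD[OF psim that] psi0 by simp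
  let ?D = "{0::real..} \<times> {0::real..}"
  have jc: "continuous_on ?D (\<lambda>p. \<beta> (fst p) (snd p))"
  proof -
    have c1: "continuous_on ?D (\<lambda>p. \<alpha>2 (fst p))"
      by (rule continuous_on_compose2[OF a2c continuous_on_fst]) auto
    have c2: "continuous_on ?D (\<lambda>p. sh (fst p))"
      by (rule continuous_on_compose2[OF shc continuous_on_fst]) auto
    have c3: "continuous_on ?D (\<lambda>p. Ph (snd p * sh (fst p)))"
      by (rule continuous_on_compose2[OF Phc continuous_on_mult[OF continuous_on_snd c2]]) auto
    have c4: "continuous_on ?D (\<lambda>p. 2 * min (\<alpha>2 (fst p)) (max (\<alpha>2 (fst p)) 1 * Ph (snd p * sh (fst p))))"
      by (intro continuous_on_mult continuous_on_const continuous_on_min c1 continuous_on_max c3)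
    have c5: "continuous_on ?D (\<lambda>p. \<psi> (2 * min (\<alpha>2 (fst p)) (max (\<alpha>2 (fst p)) 1 * Ph (snd p * sh (fst p)))))"
      by (rule continuous_on_compose2[OF psic c4]) auto
    show ?thesis unfolding \<beta>_def
      by (intro continuous_on_add c5 continuous_on_mult continuous_on_fst continuous_on_exp
          continuous_on_minus continuous_on_snd continuous_on_id)
  qed
  have jc': "continuous_on ?D (\<lambda>(r,T). \<beta> r T)"
    using jc by (simp add: case_prod_beta')
  have monoT: "\<psi> (2 * min (\<alpha>2 r) (max (\<alpha>2 r) 1 * Ph (T' * sh r))) \<le>
               \<psi> (2 * min (\<alpha>2 r) (max (\<alpha>2 r) 1 * Ph (T * sh r)))" if "T \<le> T'" for r T T'
  proof -
    have "T * sh r \<le> T' * sh r" using that sh0[of r] by (simp add: mult_right_mono)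
    then have "Ph (T' * sh r) \<le> Ph (T * sh r)" by (rule Phm)
    then have "max (\<alpha>2 r) 1 * Ph (T' * sh r) \<le> max (\<alpha>2 r) 1 * Ph (T * sh r)"
      by (rule mult_left_mono) simp
    then show ?thesis by (intro monoD[OF psim]) simp
  qed
  have monor: "\<psi> (2 * min (\<alpha>2 r) (max (\<alpha>2 r) 1 * Ph (T * sh r))) \<le>
               \<psi> (2 * min (\<alpha>2 r') (max (\<alpha>2 r') 1 * Ph (T * sh r')))" if "0 \<le> r" "r \<le> r'" "0 \<le> T" for r r' T
  proof -
    have a: "\<alpha>2 r \<le> \<alpha>2 r'" by (rule classK_mono[OF a2 that(1,2)])
    have "T * sh r' \<le> T * sh r" using shm[OF that(2)] that(3) by (simp add: mult_left_mono)
    then have b: "Ph (T * sh r) \<le> Ph (T * sh r')" by (rule Phm)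
    have "max (\<alpha>2 r) 1 * Ph (T * sh r) \<le> max (\<alpha>2 r') 1 * Ph (T * sh r')"
      by (rule mult_mono) (use a b Ph0 in auto)
    then show ?thesis using a by (intro monoD[OF psim]) linarith
  qed
  have KL: "class_KL \<beta>"
    unfolding class_KL_def
  proof (intro conjI allI impI)
    show "continuous_on ?D (\<lambda>(r,T). \<beta> r T)" by (rule jc')
  next
    fix T :: real assume T: "0 \<le> T"
    show "class_K (\<lambda>r. \<beta> r T)"
      unfolding class_K_def class_P_def
    proof (intro conjI allI impI)
      show "continuous_on {0..} (\<lambda>r. \<beta> r T)"
        by (rule continuous_on_compose2[OF jc, of "{0..}" "\<lambda>r. (r, T)", simplified])
          (use T in \<open>auto intro: continuous_intros\<close>)
      have "\<alpha>2 0 = 0" using a2 unfolding class_K_def class_P_def by auto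
      then show "\<beta> 0 T = 0" unfolding \<beta>_def using Ph0 psi0 by (simp add: min_def)
      fix r :: real assume "0 < r"
      then show "0 < \<beta> r T" unfolding \<beta>_def
        using psin[of "2 * min (\<alpha>2 r) (max (\<alpha>2 r) 1 * Ph (T * sh r))"] a2n[of r] Ph0[of "T * sh r"]
        by (smt (verit) exp_gt_zero mult_nonneg_nonneg mult_pos_pos)
    next
      show "strict_mono_on {0..} (\<lambda>r. \<beta> r T)"
        unfolding strict_mono_on_def
      proof (intro allI impI)
        fix r r' :: real assume "r \<in> {0..} \<and> r' \<in> {0..} \<and> r < r'"
        then have rr: "0 \<le> r" "r < r'" by auto
        have "r * exp (- T) < r' * exp (- T)" using rr by simp
        then show "\<beta> r T < \<beta> r' T" unfolding \<beta>_def using monor[of r r' T] rr T by linarith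
      qed
    qed
  next
    fix r :: real assume r: "0 < r"
    have "continuous_on {0..} (\<lambda>T. \<beta> r T)"
      by (rule continuous_on_compose2[OF jc, of "{0..}" "\<lambda>T. (r, T)", simplified])
        (use r in \<open>auto intro: continuous_intros\<close>)
    then show "continuous_on {0..} (\<beta> r)" by simp
    fix s t :: real assume "0 \<le> s" "s < t"
    have "r * exp (- t) < r * exp (- s)" using r \<open>s < t\<close> by simp
    then show "\<beta> r t < \<beta> r s" unfolding \<beta>_def using monoT[of s t r] \<open>s < t\<close> by linarith
  next
    fix r :: real assume r: "0 < r"
    have l1: "filterlim (\<lambda>T. T * sh r) at_top at_top"
      by (rule filterlim_at_top_mult_tendsto_pos[OF tendsto_const sh0 filterlim_ident])
    have l2: "((\<lambda>T. Ph (T * sh r)) \<longlongrightarrow> 0) at_top"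
      by (rule filterlim_compose[OF Phlim l1])
    have l3: "((\<lambda>T. 2 * min (\<alpha>2 r) (max (\<alpha>2 r) 1 * Ph (T * sh r))) \<longlongrightarrow> 2 * min (\<alpha>2 r) (max (\<alpha>2 r) 1 * 0)) at_top"
      by (intro tendsto_mult tendsto_const tendsto_min l2)
    have "2 * min (\<alpha>2 r) (max (\<alpha>2 r) 1 * 0) = 0" using a2n[of r] r by (simp add: min_def)
    have l4: "((\<lambda>T. \<psi> (2 * min (\<alpha>2 r) (max (\<alpha>2 r) 1 * Ph (T * sh r)))) \<longlongrightarrow> \<psi> 0) at_top"
    proof (rule continuous_on_tendsto_compose[OF psic])
      show "((\<lambda>T. 2 * min (\<alpha>2 r) (max (\<alpha>2 r) 1 * Ph (T * sh r))) \<longlongrightarrow> 0) at_top"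
        using l3 \<open>2 * min (\<alpha>2 r) (max (\<alpha>2 r) 1 * 0) = 0\<close> by simp
    qed auto
    have l5: "((\<lambda>T::real. exp (- T)) \<longlongrightarrow> 0) at_top"
      using filterlim_compose[OF exp_at_bot filterlim_uminus_at_bot_at_top] by simp
    have "((\<lambda>T. \<psi> (2 * min (\<alpha>2 r) (max (\<alpha>2 r) 1 * Ph (T * sh r))) + r * exp (- T)) \<longlongrightarrow> \<psi> 0 + r * 0) at_top"
      by (intro tendsto_add l4 tendsto_mult tendsto_const l5)
    then show "(\<beta> r \<longlongrightarrow> 0) at_top" unfolding \<beta>_def using psi0 by simp
  qed
  have bound: "\<psi> (2 * min (\<alpha>2 r) (max (\<alpha>2 r) 1 * \<Phi> (T * \<sigma> r))) \<le> \<beta> r T" if "0 \<le> r" "0 \<le> T" for r T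
  proof -
    have "0 \<le> T * sh r" using that sh0[of r] by simp
    moreover have "T * sh r \<le> T * \<sigma> r" using shs[OF that(1)] that(2) by (simp add: mult_left_mono)
    ultimately have "\<Phi> (T * \<sigma> r) \<le> \<Phi> (T * sh r)" by (rule Phim)
    also have "\<dots> \<le> Ph (T * sh r)" by (rule PhiPh) fact
    finally have "max (\<alpha>2 r) 1 * \<Phi> (T * \<sigma> r) \<le> max (\<alpha>2 r) 1 * Ph (T * sh r)"
      by (rule mult_left_mono) simp
    then have "\<psi> (2 * min (\<alpha>2 r) (max (\<alpha>2 r) 1 * \<Phi> (T * \<sigma> r))) \<le> \<psi> (2 * min (\<alpha>2 r) (max (\<alpha>2 r) 1 * Ph (T * sh r)))"
      by (intro monoD[OF psim]) simp
    moreover have "0 \<le> r * exp (- T)" using that by simp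
    ultimately show ?thesis unfolding \<beta>_def by linarith
  qed
  show ?thesis using KL bound by blast
qed

lemma Kinf_big:
  assumes "class_Kinf a1"
  shows "\<exists>b. \<forall>x\<ge>b. a1 x > K"
proof -
  have "filterlim a1 at_top at_top" using assms unfolding class_Kinf_def by auto
  then have "eventually (\<lambda>x. a1 x > K) at_top" by (simp add: filterlim_at_top_dense)
  then show ?thesis unfolding eventually_at_top_linorder by blast
qed

lemma fc_lemma:
  fixes phi :: "real \<Rightarrow> real \<Rightarrow> 'x::real_normed_vector \<Rightarrow> (real \<Rightarrow> 'u::real_normed_vector) \<Rightarrow> 'x"
    and tm :: "real \<Rightarrow> 'x \<Rightarrow> (real \<Rightarrow> 'u) \<Rightarrow> ereal"
  assumes cs: "control_system phi tm" and bic: "BIC phi tm"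
    and LF: "coercive_iISS_LF_with phi V eta chi"
  shows "forward_complete tm"
  unfolding forward_complete_def
proof (intro allI impI ballI)
  fix t0 :: real and x0 :: 'x and u :: "real \<Rightarrow> 'u" assume t0: "0 \<le> t0" and u: "u \<in> PC"
  show "tm t0 x0 u = \<infinity>"
  proof (rule ccontr)
    assume ninf: "tm t0 x0 u \<noteq> \<infinity>"
    have gt: "ereal t0 < tm t0 x0 u" by (rule cs_init(2)[OF cs t0 u])
    then obtain Tm where Tm: "tm t0 x0 u = ereal Tm" using ninf by (cases "tm t0 x0 u") auto
    then have "t0 < Tm" using gt by simp
    have unb: "\<not> bounded ((\<lambda>t. phi t t0 x0 u) ` dom_phi tm t0 x0 u)"
      using bic t0 u ninf unfolding BIC_def by (metis ereal_less_PInfty less_ereal.simps(2) gt Tm)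
    have etaP: "class_P eta" and chiK: "class_K chi" using LF_parts[OF LF] by auto
    obtain a1 a2 where a1: "class_Kinf a1" and a12: "\<forall>t\<ge>0. \<forall>x. a1 (norm x) \<le> V t x \<and> V t x \<le> a2 (norm x)"
      using LF_parts(5)[OF LF] by blast
    define f where "f = (\<lambda>\<tau>. chi (norm (u \<tau>)))"
    define K where "K = V t0 x0 + integral {t0..Tm} f"
    obtain b where b: "\<And>x. x \<ge> b \<Longrightarrow> a1 x > K" using Kinf_big[OF a1, of K] by blast
    have "norm (phi t t0 x0 u) \<le> b" if "t \<in> dom_phi tm t0 x0 u" for t
    proof -
      from that have t: "t0 \<le> t" "ereal t < tm t0 x0 u" unfolding dom_phi_def by auto
      then have "t < Tm" using Tm by simp
      have "V t (phi t t0 x0 u) - V t0 (phi t0 t0 x0 u) \<le> - 0 * (t - t0) + integral {t0..t} f"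
        unfolding f_def
        by (rule traj_bound[OF cs LF t0 u order_refl t(1) t(2)]) (use etaP classP_nonneg t0 in auto)
      moreover have "phi t0 t0 x0 u = x0" by (rule cs_init(1)[OF cs t0 u])
      moreover have "integral {t0..t} f \<le> integral {t0..Tm} f"
      proof (rule integral_subset_le)
        show "{t0..t} \<subseteq> {t0..Tm}" using \<open>t < Tm\<close> by auto
        show "f integrable_on {t0..t}" unfolding f_def by (rule PC_integrable[OF u chiK t0])
        show "f integrable_on {t0..Tm}" unfolding f_def by (rule PC_integrable[OF u chiK t0])
        show "\<forall>x\<in>{t0..Tm}. 0 \<le> f x" unfolding f_def using classK_nonneg[OF chiK] by auto
      qed
      moreover have "a1 (norm (phi t t0 x0 u)) \<le> V t (phi t t0 x0 u)" using a12 t t0 by auto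
      ultimately have "a1 (norm (phi t t0 x0 u)) \<le> K" unfolding K_def by simp
      then show ?thesis using b[of "norm (phi t t0 x0 u)"] by force
    qed
    then have "bounded ((\<lambda>t. phi t t0 x0 u) ` dom_phi tm t0 x0 u)"
      unfolding bounded_iff by blast
    then show False using unb by simp
  qed
qed

lemma inv_majorant:
  assumes a1: "class_Kinf a1"
  shows "\<exists>\<psi>. class_Kinf \<psi> \<and> continuous_on UNIV \<psi> \<and> mono \<psi> \<and> \<psi> 0 = 0 \<and>
            (\<forall>\<rho> v. 0 \<le> \<rho> \<longrightarrow> a1 \<rho> \<le> v \<longrightarrow> \<rho> \<le> \<psi> v)"
proof -
  have a1K: "class_K a1" using a1 unfolding class_Kinf_def by auto
  define f where "f = (\<lambda>v. Inf {\<rho>. 0 \<le> \<rho> \<and> v < a1 \<rho>})"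
  have ne: "{\<rho>. 0 \<le> \<rho> \<and> v < a1 \<rho>} \<noteq> {}" for v
  proof -
    obtain b where "\<And>x. x \<ge> b \<Longrightarrow> a1 x > v" using Kinf_big[OF a1] by blast
    then have "max b 0 \<in> {\<rho>. 0 \<le> \<rho> \<and> v < a1 \<rho>}" by auto
    then show ?thesis by blast
  qed
  have bb: "bdd_below {\<rho>. 0 \<le> \<rho> \<and> v < a1 \<rho>}" for v by (rule bdd_belowI[of _ 0]) auto
  have fm: "mono_on {0<..} f" unfolding mono_on_def f_def
  proof (intro allI impI)
    fix v v' :: real assume "v \<in> {0<..} \<and> v' \<in> {0<..} \<and> v \<le> v'"
    then have "v \<le> v'" by auto
    show "Inf {\<rho>. 0 \<le> \<rho> \<and> v < a1 \<rho>} \<le> Inf {\<rho>. 0 \<le> \<rho> \<and> v' < a1 \<rho>}"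
      by (rule cInf_superset_mono[OF ne bb]) (use \<open>v \<le> v'\<close> in auto)
  qed
  have f0: "\<forall>\<epsilon>>0. \<exists>\<delta>>0. \<forall>s. 0<s \<longrightarrow> s<\<delta> \<longrightarrow> f s \<le> \<epsilon>"
  proof (intro allI impI)
    fix \<epsilon> :: real assume "\<epsilon> > 0"
    have "a1 \<epsilon> > 0" by (rule classK_pos[OF a1K \<open>\<epsilon> > 0\<close>])
    moreover have "f s \<le> \<epsilon>" if "s < a1 \<epsilon>" for s
      unfolding f_def by (rule cInf_lower[OF _ bb]) (use that \<open>\<epsilon> > 0\<close> in auto)
    ultimately show "\<exists>\<delta>>0. \<forall>s. 0<s \<longrightarrow> s<\<delta> \<longrightarrow> f s \<le> \<epsilon>" by blast
  qed
  obtain \<psi> where psi: "class_Kinf \<psi>" "continuous_on UNIV \<psi>" "mono \<psi>" "\<forall>s>0. f s < \<psi> s" "\<psi> 0 = 0"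
    using K_majorant[OF fm f0] by blast
  have "\<rho> \<le> \<psi> v" if r: "0 \<le> \<rho>" "a1 \<rho> \<le> v" for \<rho> v
  proof (cases "\<rho> = 0")
    case True
    have "0 \<le> v" using r classK_nonneg[OF a1K r(1)] by linarith
    then show ?thesis using True monoD[OF psi(3), of 0 v] psi(5) by simp
  next
    case False
    then have "0 < a1 \<rho>" using classK_pos[OF a1K] r by simp
    then have vp: "0 < v" using r by simp
    have "\<rho> \<le> f v" unfolding f_def
    proof (rule cInf_greatest[OF ne])
      fix x assume "x \<in> {\<rho>. 0 \<le> \<rho> \<and> v < a1 \<rho>}"
      then have x: "0 \<le> x" "v < a1 x" by auto
      show "\<rho> \<le> x"
      proof (rule ccontr)
        assume "\<not> \<rho> \<le> x"
        then have "a1 x \<le> a1 \<rho>" using classK_mono[OF a1K x(1)] by simp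
        then show False using x r by simp
      qed
    qed
    then show ?thesis using psi(4) vp by force
  qed
  then show ?thesis using psi by blast
qed

lemma Kinf_scale:
  assumes "class_Kinf \<psi>" "continuous_on UNIV \<psi>" "k > 0"
  shows "class_Kinf (\<lambda>v. \<psi> (k * v))"
proof -
  have K: "class_K \<psi>" using assms unfolding class_Kinf_def by auto
  have c: "continuous_on {0..} (\<lambda>v. \<psi> (k * v))"
    by (rule continuous_on_compose2[OF assms(2)]) (auto intro: continuous_intros)
  have "class_K (\<lambda>v. \<psi> (k * v))"
    unfolding class_K_def class_P_def strict_mono_on_def
    using c K assms(3) by (auto simp: class_K_def class_P_def strict_mono_on_def)
  moreover have "filterlim (\<lambda>v. \<psi> (k * v)) at_top at_top"
  proof (rule filterlim_compose[of \<psi>])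
    show "filterlim \<psi> at_top at_top" using assms unfolding class_Kinf_def by auto
    show "filterlim (\<lambda>v. k * v) at_top at_top"
      using filterlim_at_top_mult_tendsto_pos[OF tendsto_const assms(3) filterlim_ident]
      by (simp add: mult.commute)
  qed
  ultimately show ?thesis unfolding class_Kinf_def by auto
qed

lemma iISS_lemma:
  fixes phi :: "real \<Rightarrow> real \<Rightarrow> 'x::real_normed_vector \<Rightarrow> (real \<Rightarrow> 'u::real_normed_vector) \<Rightarrow> 'x"
    and tm :: "real \<Rightarrow> 'x \<Rightarrow> (real \<Rightarrow> 'u) \<Rightarrow> ereal"
  assumes cs: "control_system phi tm" and fc: "forward_complete tm"
    and LF: "coercive_iISS_LF_with phi V eta chi"
  shows "iISS phi"
proof -
  have etaP: "class_P eta" and chiK: "class_K chi" using LF_parts[OF LF] by auto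
  obtain a1 a2 where a1: "class_Kinf a1" and a2: "class_Kinf a2"
    and a12: "\<forall>t\<ge>0. \<forall>x. a1 (norm x) \<le> V t x \<and> V t x \<le> a2 (norm x)"
    using LF_parts(5)[OF LF] by blast
  have a2K: "class_K a2" using a2 unfolding class_Kinf_def by auto
  obtain \<psi> where psi: "class_Kinf \<psi>" "continuous_on UNIV \<psi>" "mono \<psi>" "\<psi> 0 = 0"
    "\<And>\<rho> v. 0 \<le> \<rho> \<Longrightarrow> a1 \<rho> \<le> v \<Longrightarrow> \<rho> \<le> \<psi> v"
    using inv_majorant[OF a1] by blast
  define \<sigma> where "\<sigma> = (\<lambda>r. Bfn eta a1 (2 * a2 r) / max (a2 r) 1)"
  define \<Phi> where "\<Phi> = Phifun eta a2"
  have sig0: "0 < \<sigma> r" for r unfolding \<sigma>_def using B_pos[OF etaP a1] by simp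
  have sigm: "\<sigma> r' \<le> \<sigma> r" if "0 \<le> r" "r \<le> r'" for r r'
  proof -
    have a: "a2 r \<le> a2 r'" by (rule classK_mono[OF a2K that])
    then have "Bfn eta a1 (2 * a2 r') \<le> Bfn eta a1 (2 * a2 r)" by (intro B_anti[OF etaP]) simp
    moreover have "max (a2 r) 1 \<le> max (a2 r') 1" using a by simp
    ultimately show ?thesis unfolding \<sigma>_def
      by (intro frac_le) (auto intro: B_nonneg[OF etaP])
  qed
  obtain \<beta> where KL: "class_KL \<beta>"
    and bnd: "\<forall>r\<ge>0. \<forall>T\<ge>0. \<psi> (2 * min (a2 r) (max (a2 r) 1 * \<Phi> (T * \<sigma> r))) \<le> \<beta> r T"
  proof -
    have "\<exists>\<beta>. class_KL \<beta> \<and> (\<forall>r\<ge>0. \<forall>T\<ge>0.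
           \<psi> (2 * min (a2 r) (max (a2 r) 1 * \<Phi> (T * \<sigma> r))) \<le> \<beta> r T)"
    proof (rule KL_construct[OF a2K psi(2) psi(3) psi(4)])
      show "\<And>S. 0 \<le> S \<Longrightarrow> 0 \<le> \<Phi> S" unfolding \<Phi>_def by (rule Phi_nonneg)
      show "\<And>S S'. 0 \<le> S \<Longrightarrow> S \<le> S' \<Longrightarrow> \<Phi> S' \<le> \<Phi> S" unfolding \<Phi>_def by (rule Phi_anti[OF etaP])
      show "\<And>\<epsilon>. \<epsilon> > 0 \<Longrightarrow> \<exists>S0. \<forall>S\<ge>S0. \<Phi> S \<le> \<epsilon>" unfolding \<Phi>_def by (rule Phi_lim[OF etaP a2K])
      show "\<And>r. 0 \<le> r \<Longrightarrow> 0 < \<sigma> r" by (rule sig0)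
      show "\<And>r r'. 0 \<le> r \<Longrightarrow> r \<le> r' \<Longrightarrow> \<sigma> r' \<le> \<sigma> r" by (rule sigm)
    qed
    then show ?thesis using that by blast
  qed
  define \<alpha> where "\<alpha> = (\<lambda>v. \<psi> (4 * v))"
  have aK: "class_Kinf \<alpha>" unfolding \<alpha>_def by (rule Kinf_scale[OF psi(1,2)]) simp
  show "iISS phi" unfolding iISS_def
  proof (rule exI[of _ \<alpha>], rule exI[of _ chi], rule exI[of _ \<beta>], intro conjI allI ballI impI aK chiK KL)
    fix x0 :: 'x and u :: "real \<Rightarrow> 'u" and t0 t :: real
    assume u: "u \<in> PC" and t0: "0 \<le> t0" and tt: "t0 \<le> t"
    have tmI: "ereal t' < tm t0 x0 u" for t' using fc t0 u unfolding forward_complete_def by auto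
    define r where "r = norm x0"
    define q where "q = a2 r"
    define Q where "Q = max q 1"
    define T where "T = t - t0"
    define f where "f = (\<lambda>\<tau>. chi (norm (u \<tau>)))"
    define J where "J = integral {t0..t} f"
    define y where "y = (\<lambda>\<tau>. V \<tau> (phi \<tau> t0 x0 u))"
    have r0: "0 \<le> r" unfolding r_def by simp
    have q0: "0 \<le> q" unfolding q_def by (rule classK_nonneg[OF a2K r0])
    have Q1: "1 \<le> Q" "q \<le> Q" unfolding Q_def by auto
    have T0: "0 \<le> T" unfolding T_def using tt by simp
    have fint: "f integrable_on {a..b}" if "t0 \<le> a" for a b
      unfolding f_def by (rule PC_integrable[OF u chiK]) (use that t0 in simp)
    have fnn: "0 \<le> f \<tau>" for \<tau> unfolding f_def by (rule classK_nonneg[OF chiK norm_ge_zero])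
    have J0: "0 \<le> J" unfolding J_def by (rule integral_nonneg[OF fint]) (use fnn in auto)
    have Jsub: "integral {a..b} f \<le> J" if "t0 \<le> a" "b \<le> t" for a b
      unfolding J_def by (rule integral_subset_le) (use that fint fnn in auto)
    have F: "y t' - y s \<le> - m * (t' - s) + integral {s..t'} f"
      if "t0 \<le> s" "s \<le> t'" "\<forall>\<tau>\<in>{s..t'}. m \<le> eta (norm (phi \<tau> t0 x0 u))" for s t' m
    proof -
      have "V t' (phi t' t0 x0 u) - V s (phi s t0 x0 u) \<le> - m * (t' - s) + integral {s..t'} (\<lambda>\<tau>. chi (norm (u \<tau>)))"
        by (rule traj_bound[of phi tm V eta chi t0 u s t' x0 m, OF cs LF t0 u that(1) that(2) tmI[of t'] that(3)])
      then show ?thesis unfolding y_def f_def .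
    qed
    have F1: "y t' - y s \<le> integral {s..t'} f" if "t0 \<le> s" "s \<le> t'" for s t'
    proof -
      have "\<forall>\<tau>\<in>{s..t'}. 0 \<le> eta (norm (phi \<tau> t0 x0 u))"
        using classP_nonneg[OF etaP norm_ge_zero] by blast
      from F[OF that this] show ?thesis by simp
    qed
    have low: "a1 (norm (phi \<tau> t0 x0 u)) \<le> y \<tau> \<and> y \<tau> \<le> a2 (norm (phi \<tau> t0 x0 u))" if "t0 \<le> \<tau>" for \<tau>
    proof -
      have "0 \<le> \<tau>" using that t0 by linarith
      then show ?thesis unfolding y_def using a12 by blast
    qed
    have y0: "y t0 \<le> q"
      using low[of t0] cs_init(1)[OF cs t0 u] unfolding q_def r_def by simp
    have yb: "y \<tau> \<le> q + J" if "t0 \<le> \<tau>" "\<tau> \<le> t" for \<tau>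
      using F1[of t0 \<tau>] Jsub[of t0 \<tau>] y0 that by simp
    have W: "y t \<le> min q (Q * \<Phi> (T * \<sigma> r)) + 2 * J"
    proof (cases "q < J")
      case True
      have "0 \<le> Q * \<Phi> (T * \<sigma> r)" using Q1 Phi_nonneg unfolding \<Phi>_def by simp
      then show ?thesis using yb[OF tt order_refl] True q0 by simp
    next
      case False
      have "(y t - J) / Q \<le> \<Phi> (T * \<sigma> r)" unfolding \<Phi>_def
      proof (rule Phi_great)
        fix c :: real assume c: "0 < c" "c \<le> 1"
        show "(y t - J) / Q \<le> max c (1 - Afn eta a2 c * (T * \<sigma> r))"
        proof (cases "\<forall>\<tau>\<in>{t0..t}. c \<le> y \<tau>")
          case True
          define m where "m = Afn eta a2 c * Bfn eta a1 (2 * q)"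
          have "\<forall>\<tau>\<in>{t0..t}. m \<le> eta (norm (phi \<tau> t0 x0 u))"
          proof
            fix \<tau> assume tau: "\<tau> \<in> {t0..t}"
            show "m \<le> eta (norm (phi \<tau> t0 x0 u))" unfolding m_def
            proof (rule rate_lb[OF etaP norm_ge_zero])
              have "c \<le> y \<tau>" using True tau by blast
              then show "c \<le> a2 (norm (phi \<tau> t0 x0 u))" using tau low[of \<tau>] by auto
              show "a1 (norm (phi \<tau> t0 x0 u)) \<le> 2 * q" using low[of \<tau>] yb[of \<tau>] tau False by auto
            qed
          qed
          then have "y t - y t0 \<le> - m * T + J" using F[OF order_refl tt] unfolding T_def J_def by simp
          then have "y t - J \<le> Q - m * T" using y0 Q1 by simp
          also have "\<dots> = Q * (1 - Afn eta a2 c * (T * \<sigma> r))"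
            unfolding m_def \<sigma>_def q_def[symmetric] Q_def[symmetric] using Q1 by (simp add: field_simps)
          finally have "(y t - J) / Q \<le> 1 - Afn eta a2 c * (T * \<sigma> r)"
            using Q1 by (simp add: pos_divide_le_eq mult.commute)
          then show ?thesis by simp
        next
          case False
          then obtain \<tau> where tau: "t0 \<le> \<tau>" "\<tau> \<le> t" "y \<tau> < c" by auto
          have "y t - y \<tau> \<le> J" using F1[OF tau(1,2)] Jsub[OF tau(1) order_refl] by simp
          then have "y t - J \<le> c * Q" using tau Q1 c by (smt (verit) mult_le_cancel_left1)
          then have "(y t - J) / Q \<le> c" using Q1 by (simp add: pos_divide_le_eq)
          then show ?thesis by simp
        qed
      qed
      then have "y t - J \<le> Q * \<Phi> (T * \<sigma> r)" using Q1 by (simp add: pos_divide_le_eq mult.commute)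
      moreover have "y t - J \<le> q" using yb[OF tt order_refl] by simp
      ultimately show ?thesis using J0 by simp
    qed
    define Wv where "Wv = min q (Q * \<Phi> (T * \<sigma> r))"
    have Wv0: "0 \<le> Wv" unfolding Wv_def using q0 Q1 Phi_nonneg[of eta a2] unfolding \<Phi>_def by simp
    have "norm (phi t t0 x0 u) \<le> \<psi> (y t)"
      using psi(5)[OF norm_ge_zero] low[OF tt] by blast
    also have "\<dots> \<le> \<psi> (Wv + 2 * J)" using W unfolding Wv_def by (intro monoD[OF psi(3)])
    also have "\<dots> \<le> \<psi> (2 * Wv) + \<psi> (4 * J)"
    proof (cases "2 * J \<le> Wv")
      case True
      then have "\<psi> (Wv + 2 * J) \<le> \<psi> (2 * Wv)" by (intro monoD[OF psi(3)]) simp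
      moreover have "0 \<le> \<psi> (4 * J)" using monoD[OF psi(3), of 0 "4 * J"] J0 psi(4) by simp
      ultimately show ?thesis by simp
    next
      case False
      then have "\<psi> (Wv + 2 * J) \<le> \<psi> (4 * J)" by (intro monoD[OF psi(3)]) simp
      moreover have "0 \<le> \<psi> (2 * Wv)" using monoD[OF psi(3), of 0 "2 * Wv"] Wv0 psi(4) by simp
      ultimately show ?thesis by simp
    qed
    also have "\<psi> (2 * Wv) \<le> \<beta> r T" using bnd r0 T0 unfolding Wv_def q_def Q_def by blast
    finally show "norm (phi t t0 x0 u) \<le> \<beta> (norm x0) (t - t0) + \<alpha> (integral {t0..t} (\<lambda>s. chi (norm (u s))))"
      unfolding \<alpha>_def r_def[symmetric] T_def[symmetric] J_def[symmetric] f_def[symmetric] by simp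
  qed
qed

definition zet :: "(real \<Rightarrow> real) \<Rightarrow> real \<Rightarrow> real" where
  "zet eta \<rho> = min (eta \<rho> / 2) (1 / (1 + \<rho>))"

lemma zet_P:
  assumes "class_P eta"
  shows "class_P (zet eta)"
  unfolding class_P_def zet_def
proof (intro conjI allI impI)
  have "continuous_on {0..} eta" using assms unfolding class_P_def by auto
  then show "continuous_on {0..} (\<lambda>\<rho>. min (eta \<rho> / 2) (1 / (1 + \<rho>)))"
    by (intro continuous_intros) auto
  show "min (eta 0 / 2) (1 / (1 + 0)) = 0" using assms unfolding class_P_def by simp
  fix r :: real assume "0 < r"
  then show "0 < min (eta r / 2) (1 / (1 + r))" using assms unfolding class_P_def by auto
qed

lemma zet_le: "class_P eta \<Longrightarrow> 0 \<le> \<rho> \<Longrightarrow> zet eta \<rho> \<le> eta \<rho> / 2"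
  unfolding zet_def by simp

lemma zet_le1: "0 \<le> \<rho> \<Longrightarrow> zet eta \<rho> \<le> 1 / (1 + \<rho>)"
  unfolding zet_def by simp

lemma Lim_chi:
  assumes chiK: "class_K chi" and s: "0 \<le> s"
  shows "ereal (chi s) \<le> Lim at_top (\<lambda>\<tau>. ereal (chi \<tau>))"
proof -
  define M where "M = (SUP \<tau>\<in>{0..}. ereal (chi \<tau>))"
  have "((\<lambda>\<tau>. ereal (chi \<tau>)) \<longlongrightarrow> M) at_top"
  proof (rule order_tendstoI)
    fix a assume "a < M"
    then obtain \<tau>0 where t0: "\<tau>0 \<in> {0..}" "a < ereal (chi \<tau>0)" unfolding M_def less_SUP_iff by blast
    show "eventually (\<lambda>\<tau>. a < ereal (chi \<tau>)) at_top"
      unfolding eventually_at_top_linorder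
    proof (intro exI[of _ \<tau>0] allI impI)
      fix \<tau> assume "\<tau>0 \<le> \<tau>"
      then have "chi \<tau>0 \<le> chi \<tau>" using classK_mono[OF chiK] t0 by auto
      then show "a < ereal (chi \<tau>)" using t0 by (meson ereal_less_eq(3) order_less_le_trans)
    qed
  next
    fix a assume "M < a"
    show "eventually (\<lambda>\<tau>. ereal (chi \<tau>) < a) at_top"
      unfolding eventually_at_top_linorder
    proof (intro exI[of _ 0] allI impI)
      fix \<tau> :: real assume "0 \<le> \<tau>"
      then have "ereal (chi \<tau>) \<le> M" unfolding M_def by (intro SUP_upper) auto
      then show "ereal (chi \<tau>) < a" using \<open>M < a\<close> by simp
    qed
  qed
  then have "Lim at_top (\<lambda>\<tau>. ereal (chi \<tau>)) = M" by (intro tendsto_Lim) auto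
  moreover have "ereal (chi s) \<le> M" unfolding M_def using s by (intro SUP_upper) auto
  ultimately show ?thesis by simp
qed

lemma exN:
  assumes etaP: "class_P eta" and chiK: "class_K chi"
    and diss: "filterlim eta at_top at_top \<or>
      Liminf at_top (\<lambda>\<tau>. ereal (eta \<tau>)) \<ge> Lim at_top (\<lambda>\<tau>. ereal (chi \<tau>))"
    and s: "0 \<le> s"
  shows "\<exists>N\<ge>0. \<forall>\<rho>\<ge>N. chi s + zet eta \<rho> \<le> eta \<rho>"
  using diss
proof
  assume "filterlim eta at_top at_top"
  then have "eventually (\<lambda>\<rho>. eta \<rho> \<ge> chi s + 1) at_top" by (simp add: filterlim_at_top)
  then obtain N where N: "\<And>\<rho>. \<rho> \<ge> N \<Longrightarrow> eta \<rho> \<ge> chi s + 1"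
    unfolding eventually_at_top_linorder by blast
  show ?thesis
  proof (intro exI[of _ "max N 0"] conjI allI impI)
    fix \<rho> assume r: "max N 0 \<le> \<rho>"
    have "zet eta \<rho> \<le> 1 / (1 + \<rho>)" using r by (intro zet_le1) simp
    also have "\<dots> \<le> 1" using r by simp
    finally show "chi s + zet eta \<rho> \<le> eta \<rho>" using N[of \<rho>] r by simp
  qed simp
next
  assume L: "Liminf at_top (\<lambda>\<tau>. ereal (eta \<tau>)) \<ge> Lim at_top (\<lambda>\<tau>. ereal (chi \<tau>))"
  have "chi (s+1) < chi (s+2)" by (rule classK_less[OF chiK]) (use s in auto)
  then have "ereal (chi (s+1)) < ereal (chi (s+2))" by simp
  also have "\<dots> \<le> Lim at_top (\<lambda>\<tau>. ereal (chi \<tau>))" by (rule Lim_chi[OF chiK]) (use s in simp)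
  also have "\<dots> \<le> Liminf at_top (\<lambda>\<tau>. ereal (eta \<tau>))" by (rule L)
  finally have "eventually (\<lambda>\<rho>. ereal (chi (s+1)) < ereal (eta \<rho>)) at_top" by (rule less_LiminfD)
  then obtain N where N: "\<And>\<rho>. \<rho> \<ge> N \<Longrightarrow> chi (s+1) < eta \<rho>"
    unfolding eventually_at_top_linorder by auto
  define d where "d = chi (s+1) - chi s"
  have d: "d > 0" unfolding d_def using classK_less[OF chiK s, of "s+1"] by simp
  show ?thesis
  proof (intro exI[of _ "max N (max (1/d) 0)"] conjI allI impI)
    fix \<rho> assume r: "max N (max (1/d) 0) \<le> \<rho>"
    then have r0: "0 \<le> \<rho>" and rd: "1/d \<le> \<rho>" by auto
    have "zet eta \<rho> \<le> 1 / (1 + \<rho>)" using r0 by (rule zet_le1)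
    also have "\<dots> \<le> d"
    proof -
      have "1 \<le> d * \<rho>" using rd d by (simp add: field_simps)
      then have "1 \<le> d * (1 + \<rho>)" using d by (simp add: algebra_simps)
      then show ?thesis using r0 by (simp add: field_simps)
    qed
    finally show "chi s + zet eta \<rho> \<le> eta \<rho>" using N[of \<rho>] r unfolding d_def by simp
  qed simp
qed

lemma gain_exists:
  assumes etaP: "class_P eta" and chiK: "class_K chi"
    and diss: "filterlim eta at_top at_top \<or>
      Liminf at_top (\<lambda>\<tau>. ereal (eta \<tau>)) \<ge> Lim at_top (\<lambda>\<tau>. ereal (chi \<tau>))"
  shows "\<exists>\<gamma>1. class_Kinf \<gamma>1 \<and> continuous_on UNIV \<gamma>1 \<and> mono \<gamma>1 \<and> \<gamma>1 0 = 0 \<and>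
     (\<forall>s\<ge>0. \<forall>\<rho>\<ge>\<gamma>1 s. chi s + zet eta \<rho> \<le> eta \<rho>)"
proof -
  define good where "good = (\<lambda>s \<rho>0. \<forall>\<rho>\<ge>\<rho>0. chi s + zet eta \<rho> \<le> eta \<rho>)"
  define G where "G = (\<lambda>s. {\<rho>0. 0 \<le> \<rho>0 \<and> good s \<rho>0})"
  define f where "f = (\<lambda>s. Inf (G s))"
  have Gne: "G s \<noteq> {}" if s0: "0 \<le> s" for s
  proof -
    obtain N where "N \<ge> 0" "\<forall>\<rho>\<ge>N. chi s + zet eta \<rho> \<le> eta \<rho>" using exN[OF etaP chiK diss s0] by blast
    then have "N \<in> G s" unfolding G_def good_def by auto
    then show ?thesis by blast
  qed
  have Gbb: "bdd_below (G s)" for s by (rule bdd_belowI[of _ 0]) (auto simp: G_def)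
  have fm: "mono_on {0<..} f" unfolding mono_on_def
  proof (intro allI impI)
    fix s s' :: real assume ss: "s \<in> {0<..} \<and> s' \<in> {0<..} \<and> s \<le> s'"
    have "G s' \<subseteq> G s"
    proof
      fix \<rho>0 assume "\<rho>0 \<in> G s'"
      moreover have "chi s \<le> chi s'" using classK_mono[OF chiK] ss by auto
      ultimately show "\<rho>0 \<in> G s" unfolding G_def good_def by force
    qed
    then show "f s \<le> f s'" unfolding f_def using ss by (intro cInf_superset_mono Gne Gbb) auto
  qed
  have f0: "\<forall>\<epsilon>>0. \<exists>\<delta>>0. \<forall>s. 0<s \<longrightarrow> s<\<delta> \<longrightarrow> f s \<le> \<epsilon>"
  proof (intro allI impI)
    fix \<epsilon> :: real assume e: "\<epsilon> > 0"
    obtain N1 where N1: "N1 \<ge> 0" "\<forall>\<rho>\<ge>N1. chi 1 + zet eta \<rho> \<le> eta \<rho>" using exN[OF etaP chiK diss, of 1] by auto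
    define b where "b = max N1 \<epsilon>"
    have "continuous_on {\<epsilon>..b} eta" using etaP e unfolding class_P_def by (auto elim: continuous_on_subset)
    then obtain x where x: "x \<in> {\<epsilon>..b}" "\<And>y. y \<in> {\<epsilon>..b} \<Longrightarrow> eta x \<le> eta y"
      using continuous_attains_inf[of "{\<epsilon>..b}" eta] unfolding b_def by auto
    have etax: "eta x > 0" using x e etaP unfolding class_P_def by auto
    have chi1: "chi 1 > 0" by (rule classK_pos[OF chiK]) simp
    define e0 where "e0 = min (eta x) (chi 1)"
    have e0: "e0 > 0" unfolding e0_def using etax chi1 by simp
    have etal: "eta \<rho> \<ge> e0" if "\<rho> \<ge> \<epsilon>" for \<rho>
    proof (cases "\<rho> \<le> b")
      case True then show ?thesis using x(2)[of \<rho>] that unfolding e0_def by auto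
    next
      case False
      then have "\<rho> \<ge> N1" unfolding b_def by auto
      then have "chi 1 + zet eta \<rho> \<le> eta \<rho>" using N1 by auto
      moreover have "0 \<le> zet eta \<rho>" using zet_P[OF etaP] classP_nonneg that e by auto
      ultimately show ?thesis unfolding e0_def by auto
    qed
    have "continuous (at 0 within {0..}) chi" using classK_cont[OF chiK]
      by (simp add: continuous_on_eq_continuous_within)
    moreover have "chi 0 = 0" using chiK unfolding class_K_def class_P_def by auto
    ultimately have "(chi \<longlongrightarrow> 0) (at 0 within {0..})" by (simp add: continuous_within)
    then have "eventually (\<lambda>s. chi s < e0/2) (at 0 within {0..})" using e0 by (intro order_tendstoD) auto
    then obtain d where d: "d > 0" "\<And>s. s \<in> {0..} \<Longrightarrow> s \<noteq> 0 \<Longrightarrow> dist s 0 < d \<Longrightarrow> chi s < e0/2"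
      unfolding eventually_at by blast
    show "\<exists>\<delta>>0. \<forall>s. 0<s \<longrightarrow> s<\<delta> \<longrightarrow> f s \<le> \<epsilon>"
    proof (intro exI[of _ d] conjI allI impI)
      fix s :: real assume s: "0 < s" "s < d"
      then have cs: "chi s < e0/2" using d(2)[of s] by (auto simp: dist_real_def)
      have "good s \<epsilon>" unfolding good_def
      proof (intro allI impI)
        fix \<rho> assume "\<epsilon> \<le> \<rho>"
        then have "zet eta \<rho> \<le> eta \<rho> / 2" "e0 \<le> eta \<rho>" using zet_le[OF etaP] etal e by auto
        then show "chi s + zet eta \<rho> \<le> eta \<rho>" using cs by linarith
      qed
      then have "\<epsilon> \<in> G s" unfolding G_def using e by auto
      then show "f s \<le> \<epsilon>" unfolding f_def by (rule cInf_lower[OF _ Gbb])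
    qed (use d in auto)
  qed
  obtain \<gamma>1 where g: "class_Kinf \<gamma>1" "continuous_on UNIV \<gamma>1" "mono \<gamma>1" "\<forall>s>0. f s < \<gamma>1 s" "\<gamma>1 0 = 0"
    using K_majorant[OF fm f0] by blast
  have "\<forall>s\<ge>0. \<forall>\<rho>\<ge>\<gamma>1 s. chi s + zet eta \<rho> \<le> eta \<rho>"
  proof (intro allI impI)
    fix s \<rho> :: real assume s: "0 \<le> s" and r: "\<gamma>1 s \<le> \<rho>"
    show "chi s + zet eta \<rho> \<le> eta \<rho>"
    proof (cases "s = 0")
      case True
      then have "0 \<le> \<rho>" using r g(5) by simp
      moreover have "chi 0 = 0" using chiK unfolding class_K_def class_P_def by auto
      ultimately show ?thesis using True zet_le[OF etaP] classP_nonneg[OF etaP] by force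
    next
      case False
      then have "f s < \<gamma>1 s" using g(4) s by auto
      then obtain \<rho>0 where "\<rho>0 \<in> G s" "\<rho>0 < \<gamma>1 s"
        unfolding f_def using cInf_lessD[OF Gne[OF s]] by blast
      then show ?thesis using r unfolding G_def good_def by auto
    qed
  qed
  then show ?thesis using g by blast
qed

lemma y_cont:
  fixes phi :: "real \<Rightarrow> real \<Rightarrow> 'x::real_normed_vector \<Rightarrow> (real \<Rightarrow> 'u::real_normed_vector) \<Rightarrow> 'x"
    and tm :: "real \<Rightarrow> 'x \<Rightarrow> (real \<Rightarrow> 'u) \<Rightarrow> ereal"
  assumes cs: "control_system phi tm" and LF: "coercive_iISS_LF_with phi V eta chi"
    and t0: "0 \<le> t0" and u: "u \<in> PC" and tmI: "\<And>t'. ereal t' < tm t0 x0 u" and a: "t0 \<le> a"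
  shows "continuous_on {a..b} (\<lambda>\<tau>. V \<tau> (phi \<tau> t0 x0 u))"
proof -
  have Vc: "continuous_on ({0..} \<times> UNIV) (\<lambda>(t,x). V t x)" by (rule LF_parts(1)[OF LF])
  have phic: "continuous_on (dom_phi tm t0 x0 u) (\<lambda>t. phi t t0 x0 u)"
    by (rule cs_cont[OF cs t0 u])
  have sub: "{a..b} \<subseteq> dom_phi tm t0 x0 u" unfolding dom_phi_def using a tmI by auto
  have "continuous_on {a..b} (\<lambda>\<tau>. (\<tau>, phi \<tau> t0 x0 u))"
    by (intro continuous_on_Pair continuous_on_id continuous_on_subset[OF phic sub])
  then have "continuous_on {a..b} (\<lambda>\<tau>. (\<lambda>(t,x). V t x) (\<tau>, phi \<tau> t0 x0 u))"
    by (rule continuous_on_compose2[OF Vc]) (use a t0 in auto)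
  then show ?thesis by simp
qed

lemma classK_comp:
  assumes "class_K g" "class_K h" "continuous_on UNIV h"
  shows "class_K (\<lambda>s. h (g s))"
proof -
  have g0: "g 0 = 0" and h0: "h 0 = 0" using assms unfolding class_K_def class_P_def by auto
  have c: "continuous_on {0..} (\<lambda>s. h (g s))"
    by (rule continuous_on_compose2[OF assms(3) classK_cont[OF assms(1)]]) auto
  have sm: "strict_mono_on {0..} (\<lambda>s. h (g s))"
    unfolding strict_mono_on_def
  proof (intro allI impI)
    fix r s :: real assume "r \<in> {0..} \<and> s \<in> {0..} \<and> r < s"
    then have "0 \<le> r" "r < s" by auto
    then have "g r < g s" "0 \<le> g r" using classK_less[OF assms(1)] classK_nonneg[OF assms(1)] by auto
    then show "h (g r) < h (g s)" using classK_less[OF assms(2)] by auto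
  qed
  have pos: "0 < h (g r)" if "0 < r" for r
  proof -
    have "h (g 0) < h (g r)" using sm that unfolding strict_mono_on_def by auto
    then show ?thesis using g0 h0 by simp
  qed
  show ?thesis unfolding class_K_def class_P_def using c sm pos g0 h0 by auto
qed

lemma classK_comp':
  assumes "class_K g" "class_K h"
  shows "class_K (\<lambda>s. h (g s))"
proof -
  have g0: "g 0 = 0" and h0: "h 0 = 0" using assms unfolding class_K_def class_P_def by auto
  have c: "continuous_on {0..} (\<lambda>s. h (g s))"
    by (rule continuous_on_compose2[OF classK_cont[OF assms(2)] classK_cont[OF assms(1)]])
      (use classK_nonneg[OF assms(1)] in auto)
  have sm: "strict_mono_on {0..} (\<lambda>s. h (g s))"
    unfolding strict_mono_on_def
  proof (intro allI impI)
    fix r s :: real assume "r \<in> {0..} \<and> s \<in> {0..} \<and> r < s"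
    then have "0 \<le> r" "r < s" by auto
    then have "g r < g s" "0 \<le> g r" using classK_less[OF assms(1)] classK_nonneg[OF assms(1)] by auto
    then show "h (g r) < h (g s)" using classK_less[OF assms(2)] by auto
  qed
  have pos: "0 < h (g r)" if "0 < r" for r
  proof -
    have "h (g 0) < h (g r)" using sm that unfolding strict_mono_on_def by auto
    then show ?thesis using g0 h0 by simp
  qed
  show ?thesis unfolding class_K_def class_P_def using c sm pos g0 h0 by auto
qed

lemma ISS_lemma:
  fixes phi :: "real \<Rightarrow> real \<Rightarrow> 'x::real_normed_vector \<Rightarrow> (real \<Rightarrow> 'u::real_normed_vector) \<Rightarrow> 'x"
    and tm :: "real \<Rightarrow> 'x \<Rightarrow> (real \<Rightarrow> 'u) \<Rightarrow> ereal"
  assumes cs: "control_system phi tm" and fc: "forward_complete tm"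
    and LF: "coercive_iISS_LF_with phi V eta chi"
    and diss: "filterlim eta at_top at_top \<or>
      Liminf at_top (\<lambda>\<tau>. ereal (eta \<tau>)) \<ge> Lim at_top (\<lambda>\<tau>. ereal (chi \<tau>))"
  shows "ISS phi tm"
proof -
  have etaP: "class_P eta" and chiK: "class_K chi" using LF_parts[OF LF] by auto
  obtain a1 a2 where a1: "class_Kinf a1" and a2: "class_Kinf a2"
    and a12: "\<forall>t\<ge>0. \<forall>x. a1 (norm x) \<le> V t x \<and> V t x \<le> a2 (norm x)"
    using LF_parts(5)[OF LF] by blast
  have a2K: "class_K a2" using a2 unfolding class_Kinf_def by auto
  obtain \<psi> where psi: "class_Kinf \<psi>" "continuous_on UNIV \<psi>" "mono \<psi>" "\<psi> 0 = 0"
    "\<And>\<rho> v. 0 \<le> \<rho> \<Longrightarrow> a1 \<rho> \<le> v \<Longrightarrow> \<rho> \<le> \<psi> v"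
    using inv_majorant[OF a1] by blast
  have psiK: "class_K \<psi>" using psi(1) unfolding class_Kinf_def by auto
  define z where "z = zet eta"
  have zP: "class_P z" unfolding z_def by (rule zet_P[OF etaP])
  obtain \<gamma>1 where g1: "class_Kinf \<gamma>1" "continuous_on UNIV \<gamma>1" "mono \<gamma>1" "\<gamma>1 0 = 0"
    "\<And>s \<rho>. 0 \<le> s \<Longrightarrow> \<gamma>1 s \<le> \<rho> \<Longrightarrow> chi s + z \<rho> \<le> eta \<rho>"
    using gain_exists[OF etaP chiK diss] unfolding z_def by blast
  have g1K: "class_K \<gamma>1" using g1(1) unfolding class_Kinf_def by auto
  define \<sigma> where "\<sigma> = (\<lambda>r. Bfn z a1 (a2 r) / max (a2 r) 1)"
  define \<Phi> where "\<Phi> = Phifun z a2"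
  have sig0: "0 < \<sigma> r" for r unfolding \<sigma>_def using B_pos[OF zP a1] by simp
  have sigm: "\<sigma> r' \<le> \<sigma> r" if "0 \<le> r" "r \<le> r'" for r r'
  proof -
    have a: "a2 r \<le> a2 r'" by (rule classK_mono[OF a2K that])
    then have "Bfn z a1 (a2 r') \<le> Bfn z a1 (a2 r)" by (intro B_anti[OF zP])
    moreover have "max (a2 r) 1 \<le> max (a2 r') 1" using a by simp
    ultimately show ?thesis unfolding \<sigma>_def
      by (intro frac_le) (auto intro: B_nonneg[OF zP])
  qed
  obtain \<beta> where KL: "class_KL \<beta>"
    and bnd: "\<forall>r\<ge>0. \<forall>T\<ge>0. \<psi> (2 * min (a2 r) (max (a2 r) 1 * \<Phi> (T * \<sigma> r))) \<le> \<beta> r T"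
  proof -
    have "\<exists>\<beta>. class_KL \<beta> \<and> (\<forall>r\<ge>0. \<forall>T\<ge>0.
           \<psi> (2 * min (a2 r) (max (a2 r) 1 * \<Phi> (T * \<sigma> r))) \<le> \<beta> r T)"
    proof (rule KL_construct[OF a2K psi(2) psi(3) psi(4)])
      show "\<And>S. 0 \<le> S \<Longrightarrow> 0 \<le> \<Phi> S" unfolding \<Phi>_def by (rule Phi_nonneg)
      show "\<And>S S'. 0 \<le> S \<Longrightarrow> S \<le> S' \<Longrightarrow> \<Phi> S' \<le> \<Phi> S" unfolding \<Phi>_def by (rule Phi_anti[OF zP])
      show "\<And>\<epsilon>. \<epsilon> > 0 \<Longrightarrow> \<exists>S0. \<forall>S\<ge>S0. \<Phi> S \<le> \<epsilon>" unfolding \<Phi>_def by (rule Phi_lim[OF zP a2K])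
      show "\<And>r. 0 \<le> r \<Longrightarrow> 0 < \<sigma> r" by (rule sig0)
      show "\<And>r r'. 0 \<le> r \<Longrightarrow> r \<le> r' \<Longrightarrow> \<sigma> r' \<le> \<sigma> r" by (rule sigm)
    qed
    then show ?thesis using that by blast
  qed
  define \<gamma> where "\<gamma> = (\<lambda>s. \<psi> (a2 (\<gamma>1 s)))"
  have gK: "class_K \<gamma>" unfolding \<gamma>_def
    by (rule classK_comp'[OF classK_comp'[OF g1K a2K] psiK])
  show "ISS phi tm" unfolding ISS_def
  proof (rule exI[of _ \<beta>], rule exI[of _ \<gamma>], intro conjI KL gK allI ballI impI)
    fix x0 :: 'x and u :: "real \<Rightarrow> 'u" and t0 :: real
    assume u: "u \<in> PC" and t0: "0 \<le> t0"
    show "tm t0 x0 u = \<infinity>" using fc u t0 unfolding forward_complete_def by auto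
  next
    fix x0 :: 'x and u :: "real \<Rightarrow> 'u" and t0 t :: real
    assume u: "u \<in> PC" and t0: "0 \<le> t0" and tt: "t0 \<le> t"
    have tmI: "ereal t' < tm t0 x0 u" for t' using fc t0 u unfolding forward_complete_def by auto
    define s where "s = input_norm u"
    have unorm: "norm (u \<tau>) \<le> s" if "0 \<le> \<tau>" for \<tau> unfolding s_def by (rule PC_norm_le[OF u that])
    have s0: "0 \<le> s" using unorm[of 0] by (meson norm_ge_zero order_trans order_refl)
    define lv where "lv = a2 (\<gamma>1 s)"
    have g1s: "0 \<le> \<gamma>1 s" by (rule classK_nonneg[OF g1K s0])
    define r where "r = norm x0"
    define q where "q = a2 r"
    define Q where "Q = max q 1"
    define T where "T = t - t0"
    define f where "f = (\<lambda>\<tau>. chi (norm (u \<tau>)))"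
    define y where "y = (\<lambda>\<tau>. V \<tau> (phi \<tau> t0 x0 u))"
    have r0: "0 \<le> r" unfolding r_def by simp
    have q0: "0 \<le> q" unfolding q_def by (rule classK_nonneg[OF a2K r0])
    have Q1: "1 \<le> Q" "q \<le> Q" unfolding Q_def by auto
    have T0: "0 \<le> T" unfolding T_def using tt by simp
    have fint: "f integrable_on {a..b}" if "t0 \<le> a" for a b
      unfolding f_def by (rule PC_integrable[OF u chiK]) (use that t0 in simp)
    have fle: "f \<tau> \<le> chi s" if "0 \<le> \<tau>" for \<tau>
      unfolding f_def by (rule classK_mono[OF chiK norm_ge_zero unorm[OF that]])
    have low: "a1 (norm (phi \<tau> t0 x0 u)) \<le> y \<tau> \<and> y \<tau> \<le> a2 (norm (phi \<tau> t0 x0 u))" if "t0 \<le> \<tau>" for \<tau>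
    proof -
      have "0 \<le> \<tau>" using that t0 by linarith
      then show ?thesis unfolding y_def using a12 by blast
    qed
    have y0: "y t0 \<le> q"
      using low[of t0] cs_init(1)[OF cs t0 u] unfolding q_def r_def by simp
    have yc: "continuous_on {a..b} y" if "t0 \<le> a" for a b
      unfolding y_def by (rule y_cont[OF cs LF t0 u tmI that])
    have region: "chi s + z (norm (phi \<tau> t0 x0 u)) \<le> eta (norm (phi \<tau> t0 x0 u))"
      if "t0 \<le> \<tau>" "lv \<le> y \<tau>" for \<tau>
    proof (rule g1(5)[OF s0])
      show "\<gamma>1 s \<le> norm (phi \<tau> t0 x0 u)"
      proof (rule ccontr)
        assume "\<not> \<gamma>1 s \<le> norm (phi \<tau> t0 x0 u)"
        then have "a2 (norm (phi \<tau> t0 x0 u)) < a2 (\<gamma>1 s)"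
          by (intro classK_less[OF a2K norm_ge_zero]) simp
        then show False using low[OF that(1)] that(2) unfolding lv_def by simp
      qed
    qed
    have F2: "y b - y a \<le> - m * (b - a)"
      if ab: "t0 \<le> a" "a \<le> b" and m0: "0 \<le> m"
        and H: "\<forall>\<tau>\<in>{a..b}. lv \<le> y \<tau> \<and> m \<le> z (norm (phi \<tau> t0 x0 u))" for a b m
    proof -
      have H2: "\<forall>\<tau>\<in>{a..b}. m + chi s \<le> eta (norm (phi \<tau> t0 x0 u))"
      proof
        fix \<tau> assume tau: "\<tau> \<in> {a..b}"
        then have "lv \<le> y \<tau>" "m \<le> z (norm (phi \<tau> t0 x0 u))" using H by auto
        moreover have "t0 \<le> \<tau>" using tau ab by auto
        ultimately show "m + chi s \<le> eta (norm (phi \<tau> t0 x0 u))" using region[of \<tau>] by linarith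
      qed
      have "V b (phi b t0 x0 u) - V a (phi a t0 x0 u) \<le> - (m + chi s) * (b - a) + integral {a..b} (\<lambda>\<tau>. chi (norm (u \<tau>)))"
        by (rule traj_bound[of phi tm V eta chi t0 u a b x0 "m + chi s", OF cs LF t0 u ab(1) ab(2) tmI[of b] H2])
      moreover have "integral {a..b} f \<le> integral {a..b} (\<lambda>_. chi s)"
        by (rule integral_le[OF fint[OF ab(1)] integrable_const_ivl]) (use fle ab t0 in auto)
      moreover have "integral {a..b} (\<lambda>_. chi s) = (b - a) * chi s" using ab by simp
      ultimately show ?thesis unfolding y_def f_def by (simp add: algebra_simps)
    qed
    have EXIT: "y b \<le> max lv (y a)" if ab: "t0 \<le> a" "a \<le> b" for a b
    proof (rule ccontr)
      assume "\<not> y b \<le> max lv (y a)"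
      then have yb: "max lv (y a) < y b" by (simp only: not_le)
      define L0 where "L0 = max lv (y a)"
      define S where "S = {\<tau>\<in>{a..b}. y \<tau> \<le> L0}"
      have Sc: "closed S" unfolding S_def
        by (rule continuous_on_closed_Collect_le[OF yc[OF ab(1)] continuous_on_const]) simp
      have "a \<in> S" unfolding S_def L0_def using ab by simp
      then have Sne: "S \<noteq> {}" by auto
      have Sb: "bdd_above S" unfolding S_def by (rule bdd_aboveI[of _ b]) auto
      define ts where "ts = Sup S"
      have tsS: "ts \<in> S" unfolding ts_def by (rule closed_contains_Sup[OF Sne Sb Sc])
      then have ts: "a \<le> ts" "ts \<le> b" "y ts \<le> L0" unfolding S_def by auto
      have "continuous_on {ts..b} y" by (rule yc) (use ts ab in simp)
      then obtain t' where t': "ts \<le> t'" "t' \<le> b" "y t' = L0"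
        using IVT'[of y ts L0 b] ts yb unfolding L0_def by auto
      then have "t' \<in> S" unfolding S_def using ts by auto
      then have "t' \<le> ts" unfolding ts_def by (rule cSup_upper[OF _ Sb])
      then have yts: "y ts = L0" using t' by simp
      have above: "lv \<le> y \<tau>" if "\<tau> \<in> {ts..b}" for \<tau>
      proof (cases "\<tau> = ts")
        case True then show ?thesis using yts unfolding L0_def by simp
      next
        case False
        then have "ts < \<tau>" using that by simp
        then have "\<tau> \<notin> S" unfolding ts_def using cSup_upper[OF _ Sb] by (meson not_le)
        then show ?thesis using that ts unfolding S_def L0_def by auto
      qed
      have "y b - y ts \<le> - 0 * (b - ts)"
        by (rule F2) (use ts ab above classP_nonneg[OF zP] in auto)
      then show False using yts yb unfolding L0_def by simp
    qed
    have ymax: "y t \<le> max lv q" using EXIT[OF order_refl tt] y0 by simp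
    have main: "y t \<le> max lv (min q (Q * \<Phi> (T * \<sigma> r)))"
    proof (cases "y t \<le> lv")
      case True then show ?thesis by simp
    next
      case False
      then have ylt: "lv < y t" by simp
      then have lq: "lv < q" using ymax by simp
      have "y t / Q \<le> \<Phi> (T * \<sigma> r)" unfolding \<Phi>_def
      proof (rule Phi_great)
        fix c :: real assume c: "0 < c" "c \<le> 1"
        show "y t / Q \<le> max c (1 - Afn z a2 c * (T * \<sigma> r))"
        proof (cases "\<forall>\<tau>\<in>{t0..t}. max c lv \<le> y \<tau>")
          case True
          define m where "m = Afn z a2 c * Bfn z a1 q"
          have m0: "0 \<le> m" unfolding m_def using A_nonneg[OF zP] B_nonneg[OF zP] by simp
          have H: "\<forall>\<tau>\<in>{t0..t}. lv \<le> y \<tau> \<and> m \<le> z (norm (phi \<tau> t0 x0 u))"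
          proof
            fix \<tau> assume tau: "\<tau> \<in> {t0..t}"
            have yt: "max c lv \<le> y \<tau>" using True tau by blast
            have "y \<tau> \<le> max lv (y t0)" using EXIT[of t0 \<tau>] tau by simp
            then have yq: "y \<tau> \<le> q" using y0 lq by simp
            have "m \<le> z (norm (phi \<tau> t0 x0 u))" unfolding m_def
            proof (rule rate_lb[OF zP norm_ge_zero])
              show "c \<le> a2 (norm (phi \<tau> t0 x0 u))" using yt low[of \<tau>] tau by auto
              show "a1 (norm (phi \<tau> t0 x0 u)) \<le> q" using yq low[of \<tau>] tau by auto
            qed
            then show "lv \<le> y \<tau> \<and> m \<le> z (norm (phi \<tau> t0 x0 u))" using yt by simp
          qed
          have "y t - y t0 \<le> - m * T" unfolding T_def by (rule F2[OF order_refl tt m0 H])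
          then have "y t \<le> Q - m * T" using y0 Q1 by simp
          also have "\<dots> = Q * (1 - Afn z a2 c * (T * \<sigma> r))"
            unfolding m_def \<sigma>_def q_def[symmetric] Q_def[symmetric] using Q1 by (simp add: field_simps)
          finally have "y t / Q \<le> 1 - Afn z a2 c * (T * \<sigma> r)"
            using Q1 by (simp add: pos_divide_le_eq mult.commute)
          then show ?thesis by simp
        next
          case False
          then obtain \<tau> where tau: "t0 \<le> \<tau>" "\<tau> \<le> t" "y \<tau> < max c lv" by auto
          have "y t \<le> max lv (y \<tau>)" by (rule EXIT[OF tau(1,2)])
          then have "y t \<le> c" using tau ylt by auto
          then have "y t \<le> c * Q" using Q1 c by (smt (verit) mult_le_cancel_left1)
          then have "y t / Q \<le> c" using Q1 by (simp add: pos_divide_le_eq)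
          then show ?thesis by simp
        qed
      qed
      then have "y t \<le> Q * \<Phi> (T * \<sigma> r)" using Q1 by (simp add: pos_divide_le_eq mult.commute)
      then show ?thesis using ymax lq by simp
    qed
    define Wv where "Wv = min q (Q * \<Phi> (T * \<sigma> r))"
    have Wv0: "0 \<le> Wv" unfolding Wv_def using q0 Q1 Phi_nonneg[of z a2] unfolding \<Phi>_def by simp
    have l0: "0 \<le> lv" unfolding lv_def by (rule classK_nonneg[OF a2K g1s])
    have "norm (phi t t0 x0 u) \<le> \<psi> (y t)"
      using psi(5)[OF norm_ge_zero] low[OF tt] by blast
    also have "\<dots> \<le> \<psi> (max lv Wv)" using main unfolding Wv_def by (intro monoD[OF psi(3)])
    also have "\<dots> \<le> \<psi> (2 * Wv) + \<psi> lv"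
    proof (cases "lv \<le> Wv")
      case True
      then have "\<psi> (max lv Wv) \<le> \<psi> (2 * Wv)" using Wv0 by (intro monoD[OF psi(3)]) simp
      moreover have "0 \<le> \<psi> lv" using monoD[OF psi(3) l0] psi(4) by simp
      ultimately show ?thesis by simp
    next
      case False
      then have "\<psi> (max lv Wv) = \<psi> lv" by simp
      moreover have "0 \<le> \<psi> (2 * Wv)" using monoD[OF psi(3), of 0 "2 * Wv"] Wv0 psi(4) by simp
      ultimately show ?thesis by simp
    qed
    also have "\<psi> (2 * Wv) \<le> \<beta> r T" using bnd r0 T0 unfolding Wv_def q_def Q_def by blast
    finally show "norm (phi t t0 x0 u) \<le> \<beta> (norm x0) (t - t0) + \<gamma> (input_norm u)"
      unfolding \<gamma>_def r_def[symmetric] T_def[symmetric] s_def[symmetric] lv_def[symmetric] by simp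
  qed
qed

theorem mainTheorem4:
  fixes phi :: "real \<Rightarrow> real \<Rightarrow> 'x::real_normed_vector \<Rightarrow> (real \<Rightarrow> 'u::real_normed_vector) \<Rightarrow> 'x"
    and tm :: "real \<Rightarrow> 'x \<Rightarrow> (real \<Rightarrow> 'u) \<Rightarrow> ereal"
  assumes "control_system phi tm"
    and "BIC phi tm"
  shows "((\<exists>V. coercive_iISS_LF phi V) \<longrightarrow> forward_complete tm \<and> iISS phi)
       \<and> ((\<exists>V. coercive_ISS_LF_diss phi V) \<longrightarrow> ISS phi tm)"
proof (rule conjI; rule impI)
  assume "\<exists>V. coercive_iISS_LF phi V"
  then obtain V eta chi where LF: "coercive_iISS_LF_with phi V eta chi"
    unfolding coercive_iISS_LF_def by blast
  have fc: "forward_complete tm" by (rule fc_lemma[OF assms(1,2) LF])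
  moreover have "iISS phi" by (rule iISS_lemma[OF assms(1) fc LF])
  ultimately show "forward_complete tm \<and> iISS phi" by blast
next
  assume "\<exists>V. coercive_ISS_LF_diss phi V"
  then obtain V eta chi where LF: "coercive_iISS_LF_with phi V eta chi"
    and diss: "filterlim eta at_top at_top \<or>
      Liminf at_top (\<lambda>\<tau>. ereal (eta \<tau>)) \<ge> Lim at_top (\<lambda>\<tau>. ereal (chi \<tau>))"
    unfolding coercive_ISS_LF_diss_def by blast
  have fc: "forward_complete tm" by (rule fc_lemma[OF assms(1,2) LF])
  show "ISS phi tm" by (rule ISS_lemma[OF assms(1) fc LF diss])
qed

end
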